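(* Let $K$ be the knot $6_2=K(11,3)$. For every $r\in(0,8)\cap\mathbb{Q}$, the fundamental group $\pi_1(S^3_r(K))$ admits a non-abelian representation into $SL(2,\mathbb{R})$.
   Context: $S^3_r(K)$ denotes Dehn surgery on $K$ with slope $r$. *)

theory Defs
  imports "HOL-Analysis.Analysis"
begin

text \<open>
  The knot group has the (Schubert/Riley) two-generator one-relator presentation
    < a, b | a w = w b >,
  with w = b^(e_1) a^(e_2) b^(e_3) ... a^(e_(alpha-1)),  e_i = (-1)^floor(i beta / alpha),
  where a, b are meridians.  The preferred longitude commuting with a is
    lambda = w w^rev a^(-2 sigma),  sigma = e_1 + ... + e_(alpha-1),
  (w^rev = w spelled backwards).  The fundamental group of S^3_(p/q)(K) is obtained by adding
  the relation a^p lambda^q = 1 (p/q in lowest terms, q > 0).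
\<close>

datatype gen = GA | GB

text \<open>A letter is a generator together with its exponent sign (True = +1, False = -1).\<close>
type_synonym word = "(gen \<times> bool) list"

definition inv_word :: "word \<Rightarrow> word" where
  "inv_word w = rev (map (\<lambda>(g, e). (g, \<not> e)) w)"

definition word_pow :: "word \<Rightarrow> int \<Rightarrow> word" where
  "word_pow w n = (if 0 \<le> n then concat (replicate (nat n) w)
                   else concat (replicate (nat (- n)) (inv_word w)))"

definition tb_sign :: "nat \<Rightarrow> nat \<Rightarrow> nat \<Rightarrow> bool" where
  "tb_sign alpha beta i = even ((i * beta) div alpha)"

definition tb_word :: "nat \<Rightarrow> nat \<Rightarrow> word" where
  "tb_word alpha beta =
     map (\<lambda>i. (if odd i then GB else GA, tb_sign alpha beta i)) [1..<alpha]"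

definition tb_sigma :: "nat \<Rightarrow> nat \<Rightarrow> int" where
  "tb_sigma alpha beta = (\<Sum>i\<in>{1..<alpha}. if tb_sign alpha beta i then 1 else -1)"

definition tb_relator :: "nat \<Rightarrow> nat \<Rightarrow> word" where
  "tb_relator alpha beta =
     [(GA, True)] @ tb_word alpha beta @ [(GB, False)] @ inv_word (tb_word alpha beta)"

definition tb_longitude :: "nat \<Rightarrow> nat \<Rightarrow> word" where
  "tb_longitude alpha beta =
     tb_word alpha beta @ rev (tb_word alpha beta) @ word_pow [(GA, True)] (- 2 * tb_sigma alpha beta)"

definition surgery_relator :: "nat \<Rightarrow> nat \<Rightarrow> rat \<Rightarrow> word" where
  "surgery_relator alpha beta r =
     (let (p, q) = quotient_of r in
      word_pow [(GA, True)] p @ word_pow (tb_longitude alpha beta) q)"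

fun letter_mat :: "real^2^2 \<Rightarrow> real^2^2 \<Rightarrow> gen \<times> bool \<Rightarrow> real^2^2" where
  "letter_mat A B (GA, e) = (if e then A else matrix_inv A)"
| "letter_mat A B (GB, e) = (if e then B else matrix_inv B)"

definition eval_word :: "real^2^2 \<Rightarrow> real^2^2 \<Rightarrow> word \<Rightarrow> real^2^2" where
  "eval_word A B w = foldr (\<lambda>l M. letter_mat A B l ** M) w (mat 1)"

text \<open>A homomorphism pi_1(S^3_r(K(alpha,beta))) \<rightarrow> SL(2,R) is determined by the images A, B
  of the generators, which must lie in SL(2,R) and kill both relators; it is non-abelian iff
  its image is non-abelian iff A and B do not commute.\<close>
definition has_nonabelian_SL2R_rep_surgery :: "nat \<Rightarrow> nat \<Rightarrow> rat \<Rightarrow> bool" where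
  "has_nonabelian_SL2R_rep_surgery alpha beta r \<longleftrightarrow>
     (\<exists>A B :: real^2^2. det A = 1 \<and> det B = 1 \<and>
        eval_word A B (tb_relator alpha beta) = mat 1 \<and>
        eval_word A B (surgery_relator alpha beta r) = mat 1 \<and>
        A ** B \<noteq> B ** A)"

end

theory Submission
  imports Defs
begin


definition mk :: "real \<Rightarrow> real \<Rightarrow> real \<Rightarrow> real \<Rightarrow> real^2^2" where
  "mk a b c d = (\<chi> i j. if i = 1 then (if j = 1 then a else b) else (if j = 1 then c else d))"

lemma mk_nth[simp]:
  "mk a b c d $ 1 $ 1 = a" "mk a b c d $ 1 $ 2 = b" "mk a b c d $ 2 $ 1 = c" "mk a b c d $ 2 $ 2 = d"
  by (simp_all add: mk_def)

lemma mk_eq_iff: "mk a b c d = mk a' b' c' d' \<longleftrightarrow> a = a' \<and> b = b' \<and> c = c' \<and> d = d'"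
  by (auto simp: vec_eq_iff forall_2 mk_def)

lemma mk_cong: "a = a' \<Longrightarrow> b = b' \<Longrightarrow> c = c' \<Longrightarrow> d = d' \<Longrightarrow> mk a b c d = mk a' b' c' d'"
  by simp

lemma mk_entries: "(M::real^2^2) = mk (M$1$1) (M$1$2) (M$2$1) (M$2$2)"
  by (auto simp: vec_eq_iff forall_2 mk_def)

lemma mk_mult: "mk a b c d ** mk e f g h = mk (a*e+b*g) (a*f+b*h) (c*e+d*g) (c*f+d*h)"
  by (simp add: vec_eq_iff forall_2 matrix_matrix_mult_def sum_2)

lemma mat1_mk: "(mat 1 :: real^2^2) = mk 1 0 0 1"
  by (simp add: vec_eq_iff forall_2 mat_def mk_def)

lemma det_mk: "det (mk a b c d) = a*d - b*c"
  by (simp add: det_2)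

lemma matrix_inv_mk:
  assumes "a*d - b*c = 1"
  shows "matrix_inv (mk a b c d) = mk d (-b) (-c) a"
proof -
  let ?M = "mk a b c d" and ?N = "mk d (-b) (-c) a"
  have 1: "?M ** ?N = mat 1" "?N ** ?M = mat 1"
    using assms by (simp_all add: mk_mult mat1_mk mk_eq_iff algebra_simps)
  have ex: "\<exists>X. ?M ** X = mat 1 \<and> X ** ?M = mat 1" using 1 by blast
  have X: "?M ** matrix_inv ?M = mat 1 \<and> matrix_inv ?M ** ?M = mat 1"
    unfolding matrix_inv_def by (rule someI_ex[OF ex])
  have "matrix_inv ?M = (?N ** ?M) ** matrix_inv ?M" using 1 by (simp add: matrix_mul_lid)
  also have "\<dots> = ?N ** (?M ** matrix_inv ?M)" by (simp add: matrix_mul_assoc)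
  also have "\<dots> = ?N" using X by (simp add: matrix_mul_rid)
  finally show ?thesis .
qed

lemma eval_word_Nil[simp]: "eval_word A B [] = mat 1"
  by (simp add: eval_word_def)
lemma eval_word_Cons[simp]: "eval_word A B (l # w) = letter_mat A B l ** eval_word A B w"
  by (simp add: eval_word_def)
lemma eval_word_append: "eval_word A B (v @ w) = eval_word A B v ** eval_word A B w"
  by (induction v) (simp_all add: matrix_mul_lid matrix_mul_assoc)

fun hat :: "real \<Rightarrow> real \<Rightarrow> gen \<times> bool \<Rightarrow> real^2^2" where
  "hat m u (GA, e) = (if e then mk (m^2) m 0 1 else mk 1 (-m) 0 (m^2))"
| "hat m u (GB, e) = (if e then mk (m^2) 0 (m*u) 1 else mk 1 0 (-(m*u)) (m^2))"

definition evalhat :: "real \<Rightarrow> real \<Rightarrow> word \<Rightarrow> real^2^2" where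
  "evalhat m u w = foldr (\<lambda>l M. hat m u l ** M) w (mat 1)"

lemma evalhat_Nil[simp]: "evalhat m u [] = mk 1 0 0 1"
  by (simp add: evalhat_def mat1_mk)
lemma evalhat_Cons[simp]: "evalhat m u (l # w) = hat m u l ** evalhat m u w"
  by (simp add: evalhat_def)

definition Am :: "real \<Rightarrow> real^2^2" where "Am m = mk m 1 0 (1/m)"
definition Bm :: "real \<Rightarrow> real \<Rightarrow> real^2^2" where "Bm m u = mk m 0 u (1/m)"

lemma eval_hat:
  assumes "m \<noteq> 0"
  shows "evalhat m u w = mk a b c d \<Longrightarrow>
     eval_word (Am m) (Bm m u) w = mk (a/m^length w) (b/m^length w) (c/m^length w) (d/m^length w)"
proof (induction w arbitrary: a b c d)
  case Nil
  then show ?case by (simp add: mat1_mk mk_eq_iff)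
next
  case (Cons l w)
  obtain a' b' c' d' where H: "evalhat m u w = mk a' b' c' d'" using mk_entries by blast
  note IH = Cons.IH[OF H, unfolded Am_def Bm_def]
  obtain g e where l: "l = (g, e)" by force
  have "mk a b c d = hat m u l ** mk a' b' c' d'" using Cons.prems H by simp
  then show ?case using assms
    by (cases g; cases e) (simp_all add: l IH Am_def Bm_def mk_mult mk_eq_iff matrix_inv_mk, (simp_all add: field_simps power2_eq_square))
qed

lemma hstep:
  assumes "evalhat m u w = mk e f g h" "hat m u l = mk a b c d"
    "a*e+b*g = A" "a*f+b*h = B" "c*e+d*g = C" "c*f+d*h = D"
  shows "evalhat m u (l # w) = mk A B C D"
  using assms by (simp add: mk_mult)



lemma evw_9: "evalhat m u [(GA,True)] = mk (m^2) (m) 0 (1)"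
  by (rule hstep[OF evalhat_Nil[of m u]], simp only: hat.simps if_True if_False, (rule refl)?, (algebra | simp)+)

lemma evw_8: "evalhat m u [(GB,True), (GA,True)] = mk (m^4) (m^3) (m^3*u) (m^2*u + 1)"
  by (rule hstep[OF evw_9], simp only: hat.simps if_True if_False, (rule refl)?, (algebra | simp)+)

lemma evw_7: "evalhat m u [(GA,True), (GB,True), (GA,True)] = mk (m^6 + m^4*u) (m^5 + m^3*u + m) (m^3*u) (m^2*u + 1)"
  by (rule hstep[OF evw_8], simp only: hat.simps if_True if_False, (rule refl)?, (algebra | simp)+)

lemma evw_6: "evalhat m u [(GB,False), (GA,True), (GB,True), (GA,True)] = mk (m^6 + m^4*u) (m^5 + m^3*u + m) (- (m^7*u) - m^5*u^2 + m^5*u) (- (m^6*u) - m^4*u^2 + m^4*u - m^2*u + m^2)"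
  by (rule hstep[OF evw_7], simp only: hat.simps if_True if_False, (rule refl)?, (algebra | simp)+)

lemma evw_5: "evalhat m u [(GA,False), (GB,False), (GA,True), (GB,True), (GA,True)] = mk (m^8*u + m^6*u^2 - m^6*u + m^6 + m^4*u) (m^7*u + m^5*u^2 - m^5*u + m^5 + 2*m^3*u - m^3 + m) (- (m^9*u) - m^7*u^2 + m^7*u) (- (m^8*u) - m^6*u^2 + m^6*u - m^4*u + m^4)"
  by (rule hstep[OF evw_6], simp only: hat.simps if_True if_False, (rule refl)?, (algebra | simp)+)

lemma evw_4: "evalhat m u [(GB,False), (GA,False), (GB,False), (GA,True), (GB,True), (GA,True)] = mk (m^8*u + m^6*u^2 - m^6*u + m^6 + m^4*u) (m^7*u + m^5*u^2 - m^5*u + m^5 + 2*m^3*u - m^3 + m) (- (m^11*u) - 2*m^9*u^2 + m^9*u - m^7*u^3 + m^7*u^2 - m^7*u - m^5*u^2) (- (m^10*u) - 2*m^8*u^2 + m^8*u - m^6*u^3 + m^6*u^2 - 2*m^6*u + m^6 - 2*m^4*u^2 + m^4*u - m^2*u)"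
  by (rule hstep[OF evw_5], simp only: hat.simps if_True if_False, (rule refl)?, (algebra | simp)+)

lemma evw_3: "evalhat m u [(GA,False), (GB,False), (GA,False), (GB,False), (GA,True), (GB,True), (GA,True)] = mk (m^12*u + 2*m^10*u^2 - m^10*u + m^8*u^3 - m^8*u^2 + 2*m^8*u + 2*m^6*u^2 - m^6*u + m^6 + m^4*u) (m^11*u + 2*m^9*u^2 - m^9*u + m^7*u^3 - m^7*u^2 + 3*m^7*u - m^7 + 3*m^5*u^2 - 2*m^5*u + m^5 + 3*m^3*u - m^3 + m) (- (m^13*u) - 2*m^11*u^2 + m^11*u - m^9*u^3 + m^9*u^2 - m^9*u - m^7*u^2) (- (m^12*u) - 2*m^10*u^2 + m^10*u - m^8*u^3 + m^8*u^2 - 2*m^8*u + m^8 - 2*m^6*u^2 + m^6*u - m^4*u)"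
  by (rule hstep[OF evw_4], simp only: hat.simps if_True if_False, (rule refl)?, (algebra | simp)+)

lemma evw_2: "evalhat m u [(GB,True), (GA,False), (GB,False), (GA,False), (GB,False), (GA,True), (GB,True), (GA,True)] = mk (m^14*u + 2*m^12*u^2 - m^12*u + m^10*u^3 - m^10*u^2 + 2*m^10*u + 2*m^8*u^2 - m^8*u + m^8 + m^6*u) (m^13*u + 2*m^11*u^2 - m^11*u + m^9*u^3 - m^9*u^2 + 3*m^9*u - m^9 + 3*m^7*u^2 - 2*m^7*u + m^7 + 3*m^5*u - m^5 + m^3) (m^13*u^2 - m^13*u + 2*m^11*u^3 - 3*m^11*u^2 + m^11*u + m^9*u^4 - 2*m^9*u^3 + 3*m^9*u^2 - m^9*u + 2*m^7*u^3 - 2*m^7*u^2 + m^7*u + m^5*u^2) (m^12*u^2 - m^12*u + 2*m^10*u^3 - 3*m^10*u^2 + m^10*u + m^8*u^4 - 2*m^8*u^3 + 4*m^8*u^2 - 3*m^8*u + m^8 + 3*m^6*u^3 - 4*m^6*u^2 + 2*m^6*u + 3*m^4*u^2 - 2*m^4*u + m^2*u)"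
  by (rule hstep[OF evw_3], simp only: hat.simps if_True if_False, (rule refl)?, (algebra | simp)+)

lemma evw_1: "evalhat m u [(GA,True), (GB,True), (GA,False), (GB,False), (GA,False), (GB,False), (GA,True), (GB,True), (GA,True)] = mk (m^16*u + 3*m^14*u^2 - 2*m^14*u + 3*m^12*u^3 - 4*m^12*u^2 + 3*m^12*u + m^10*u^4 - 2*m^10*u^3 + 5*m^10*u^2 - 2*m^10*u + m^10 + 2*m^8*u^3 - 2*m^8*u^2 + 2*m^8*u + m^6*u^2) (m^15*u + 3*m^13*u^2 - 2*m^13*u + 3*m^11*u^3 - 4*m^11*u^2 + 4*m^11*u - m^11 + m^9*u^4 - 2*m^9*u^3 + 7*m^9*u^2 - 5*m^9*u + 2*m^9 + 3*m^7*u^3 - 4*m^7*u^2 + 5*m^7*u - m^7 + 3*m^5*u^2 - 2*m^5*u + m^5 + m^3*u) (m^13*u^2 - m^13*u + 2*m^11*u^3 - 3*m^11*u^2 + m^11*u + m^9*u^4 - 2*m^9*u^3 + 3*m^9*u^2 - m^9*u + 2*m^7*u^3 - 2*m^7*u^2 + m^7*u + m^5*u^2) (m^12*u^2 - m^12*u + 2*m^10*u^3 - 3*m^10*u^2 + m^10*u + m^8*u^4 - 2*m^8*u^3 + 4*m^8*u^2 - 3*m^8*u + m^8 + 3*m^6*u^3 - 4*m^6*u^2 + 2*m^6*u + 3*m^4*u^2 - 2*m^4*u + m^2*u)"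
  by (rule hstep[OF evw_2], simp only: hat.simps if_True if_False, (rule refl)?, (algebra | simp)+)

lemma evw_0: "evalhat m u [(GB,True), (GA,True), (GB,True), (GA,False), (GB,False), (GA,False), (GB,False), (GA,True), (GB,True), (GA,True)] = mk (m^18*u + 3*m^16*u^2 - 2*m^16*u + 3*m^14*u^3 - 4*m^14*u^2 + 3*m^14*u + m^12*u^4 - 2*m^12*u^3 + 5*m^12*u^2 - 2*m^12*u + m^12 + 2*m^10*u^3 - 2*m^10*u^2 + 2*m^10*u + m^8*u^2) (m^17*u + 3*m^15*u^2 - 2*m^15*u + 3*m^13*u^3 - 4*m^13*u^2 + 4*m^13*u - m^13 + m^11*u^4 - 2*m^11*u^3 + 7*m^11*u^2 - 5*m^11*u + 2*m^11 + 3*m^9*u^3 - 4*m^9*u^2 + 5*m^9*u - m^9 + 3*m^7*u^2 - 2*m^7*u + m^7 + m^5*u) (m^17*u^2 + 3*m^15*u^3 - 2*m^15*u^2 + 3*m^13*u^4 - 4*m^13*u^3 + 4*m^13*u^2 - m^13*u + m^11*u^5 - 2*m^11*u^4 + 7*m^11*u^3 - 5*m^11*u^2 + 2*m^11*u + 3*m^9*u^4 - 4*m^9*u^3 + 5*m^9*u^2 - m^9*u + 3*m^7*u^3 - 2*m^7*u^2 + m^7*u + m^5*u^2) (m^16*u^2 + 3*m^14*u^3 - 2*m^14*u^2 + 3*m^12*u^4 - 4*m^12*u^3 + 5*m^12*u^2 - 2*m^12*u + m^10*u^5 - 2*m^10*u^4 + 9*m^10*u^3 - 8*m^10*u^2 +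 3*m^10*u + 4*m^8*u^4 - 6*m^8*u^3 + 9*m^8*u^2 - 4*m^8*u + m^8 + 6*m^6*u^3 - 6*m^6*u^2 + 3*m^6*u + 4*m^4*u^2 - 2*m^4*u + m^2*u)"
  by (rule hstep[OF evw_1], simp only: hat.simps if_True if_False, (rule refl)?, (algebra | simp)+)

lemma evr_9: "evalhat m u [(GB,True)] = mk (m^2) 0 (m*u) (1)"
  by (rule hstep[OF evalhat_Nil[of m u]], simp only: hat.simps if_True if_False, (rule refl)?, (algebra | simp)+)

lemma evr_8: "evalhat m u [(GA,True), (GB,True)] = mk (m^4 + m^2*u) (m) (m*u) (1)"
  by (rule hstep[OF evr_9], simp only: hat.simps if_True if_False, (rule refl)?, (algebra | simp)+)

lemma evr_7: "evalhat m u [(GB,True), (GA,True), (GB,True)] = mk (m^6 + m^4*u) (m^3) (m^5*u + m^3*u^2 + m*u) (m^2*u + 1)"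
  by (rule hstep[OF evr_8], simp only: hat.simps if_True if_False, (rule refl)?, (algebra | simp)+)

lemma evr_6: "evalhat m u [(GA,False), (GB,True), (GA,True), (GB,True)] = mk (- (m^6*u) + m^6 - m^4*u^2 + m^4*u - m^2*u) (- (m^3*u) + m^3 - m) (m^7*u + m^5*u^2 + m^3*u) (m^4*u + m^2)"
  by (rule hstep[OF evr_7], simp only: hat.simps if_True if_False, (rule refl)?, (algebra | simp)+)

lemma evr_5: "evalhat m u [(GB,False), (GA,False), (GB,True), (GA,True), (GB,True)] = mk (- (m^6*u) + m^6 - m^4*u^2 + m^4*u - m^2*u) (- (m^3*u) + m^3 - m) (m^9*u + 2*m^7*u^2 - m^7*u + m^5*u^3 - m^5*u^2 + m^5*u + m^3*u^2) (m^6*u + m^4*u^2 - m^4*u + m^4 + m^2*u)"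
  by (rule hstep[OF evr_6], simp only: hat.simps if_True if_False, (rule refl)?, (algebra | simp)+)

lemma evr_4: "evalhat m u [(GA,False), (GB,False), (GA,False), (GB,True), (GA,True), (GB,True)] = mk (- (m^10*u) - 2*m^8*u^2 + m^8*u - m^6*u^3 + m^6*u^2 - 2*m^6*u + m^6 - 2*m^4*u^2 + m^4*u - m^2*u) (- (m^7*u) - m^5*u^2 + m^5*u - m^5 - 2*m^3*u + m^3 - m) (m^11*u + 2*m^9*u^2 - m^9*u + m^7*u^3 - m^7*u^2 + m^7*u + m^5*u^2) (m^8*u + m^6*u^2 - m^6*u + m^6 + m^4*u)"
  by (rule hstep[OF evr_5], simp only: hat.simps if_True if_False, (rule refl)?, (algebra | simp)+)

lemma evr_3: "evalhat m u [(GB,False), (GA,False), (GB,False), (GA,False), (GB,True), (GA,True), (GB,True)] = mk (- (m^10*u) - 2*m^8*u^2 + m^8*u - m^6*u^3 + m^6*u^2 - 2*m^6*u + m^6 - 2*m^4*u^2 + m^4*u - m^2*u) (- (m^7*u) - m^5*u^2 + m^5*u - m^5 - 2*m^3*u + m^3 - m) (m^13*u + 3*m^11*u^2 - m^11*u + 3*m^9*u^3 - 2*m^9*u^2 + m^9*u + m^7*u^4 - m^7*u^3 + 3*m^7*u^2 - m^7*u + 2*m^5*u^3 - m^5*u^2 + m^3*u^2) (m^10*u + 2*m^8*u^2 - m^8*u + m^8 + m^6*u^3 - m^6*u^2 + 2*m^6*u + 2*m^4*u^2 - m^4*u + m^2*u)"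
  by (rule hstep[OF evr_4], simp only: hat.simps if_True if_False, (rule refl)?, (algebra | simp)+)

lemma evr_2: "evalhat m u [(GA,True), (GB,False), (GA,False), (GB,False), (GA,False), (GB,True), (GA,True), (GB,True)] = mk (m^14*u + 3*m^12*u^2 - 2*m^12*u + 3*m^10*u^3 - 4*m^10*u^2 + 2*m^10*u + m^8*u^4 - 2*m^8*u^3 + 4*m^8*u^2 - 3*m^8*u + m^8 + 2*m^6*u^3 - 3*m^6*u^2 + m^6*u + m^4*u^2 - m^4*u) (m^11*u + 2*m^9*u^2 - 2*m^9*u + m^9 + m^7*u^3 - 2*m^7*u^2 + 3*m^7*u - m^7 + 2*m^5*u^2 - 3*m^5*u + m^5 + m^3*u - m^3) (m^13*u + 3*m^11*u^2 - m^11*u + 3*m^9*u^3 - 2*m^9*u^2 + m^9*u + m^7*u^4 - m^7*u^3 + 3*m^7*u^2 - m^7*u + 2*m^5*u^3 - m^5*u^2 + m^3*u^2) (m^10*u + 2*m^8*u^2 - m^8*u + m^8 + m^6*u^3 - m^6*u^2 + 2*m^6*u + 2*m^4*u^2 - m^4*u + m^2*u)"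
  by (rule hstep[OF evr_3], simp only: hat.simps if_True if_False, (rule refl)?, (algebra | simp)+)

lemma evr_1: "evalhat m u [(GB,True), (GA,True), (GB,False), (GA,False), (GB,False), (GA,False), (GB,True), (GA,True), (GB,True)] = mk (m^16*u + 3*m^14*u^2 - 2*m^14*u + 3*m^12*u^3 - 4*m^12*u^2 + 2*m^12*u + m^10*u^4 - 2*m^10*u^3 + 4*m^10*u^2 - 3*m^10*u + m^10 + 2*m^8*u^3 - 3*m^8*u^2 + m^8*u + m^6*u^2 - m^6*u) (m^13*u + 2*m^11*u^2 - 2*m^11*u + m^11 + m^9*u^3 - 2*m^9*u^2 + 3*m^9*u - m^9 + 2*m^7*u^2 - 3*m^7*u + m^7 + m^5*u - m^5) (m^15*u^2 + 3*m^13*u^3 - 2*m^13*u^2 + m^13*u + 3*m^11*u^4 - 4*m^11*u^3 + 5*m^11*u^2 - m^11*u + m^9*u^5 - 2*m^9*u^4 + 7*m^9*u^3 - 5*m^9*u^2 + 2*m^9*u + 3*m^7*u^4 - 4*m^7*u^3 + 4*m^7*u^2 - m^7*u + 3*m^5*u^3 - 2*m^5*u^2 + m^3*u^2) (m^12*u^2 + 2*m^10*u^3 - 2*m^10*u^2 + 2*m^10*u + m^8*u^4 - 2*m^8*u^3 + 5*m^8*u^2 - 2*m^8*u + m^8 + 3*m^6*u^3 - 4*m^6*u^2 + 3*m^6*u + 3*m^4*u^2 - 2*m^4*u + m^2*u)"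
  by (rule hstep[OF evr_2], simp only: hat.simps if_True if_False, (rule refl)?, (algebra | simp)+)

lemma evr_0: "evalhat m u [(GA,True), (GB,True), (GA,True), (GB,False), (GA,False), (GB,False), (GA,False), (GB,True), (GA,True), (GB,True)] = mk (m^18*u + 4*m^16*u^2 - 2*m^16*u + 6*m^14*u^3 - 6*m^14*u^2 + 3*m^14*u + 4*m^12*u^4 - 6*m^12*u^3 + 9*m^12*u^2 - 4*m^12*u + m^12 + m^10*u^5 - 2*m^10*u^4 + 9*m^10*u^3 - 8*m^10*u^2 + 3*m^10*u + 3*m^8*u^4 - 4*m^8*u^3 + 5*m^8*u^2 - 2*m^8*u + 3*m^6*u^3 - 2*m^6*u^2 + m^4*u^2) (m^15*u + 3*m^13*u^2 - 2*m^13*u + m^13 + 3*m^11*u^3 - 4*m^11*u^2 + 5*m^11*u - m^11 + m^9*u^4 - 2*m^9*u^3 + 7*m^9*u^2 - 5*m^9*u + 2*m^9 + 3*m^7*u^3 - 4*m^7*u^2 + 4*m^7*u - m^7 + 3*m^5*u^2 - 2*m^5*u + m^3*u) (m^15*u^2 + 3*m^13*u^3 - 2*m^13*u^2 + m^13*u + 3*m^11*u^4 - 4*m^11*u^3 + 5*m^11*u^2 - m^11*u + m^9*u^5 - 2*m^9*u^4 + 7*m^9*u^3 - 5*m^9*u^2 + 2*m^9*u + 3*m^7*u^4 - 4*m^7*u^3 + 4*m^7*u^2 - m^7*u + 3*m^5*u^3 - 2*m^5*u^2 + m^3*u^2) (m^12*u^2 + 2*m^10*u^3 - 2*m^10*u^2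 + 2*m^10*u + m^8*u^4 - 2*m^8*u^3 + 5*m^8*u^2 - 2*m^8*u + m^8 + 3*m^6*u^3 - 4*m^6*u^2 + 3*m^6*u + 3*m^4*u^2 - 2*m^4*u + m^2*u)"
  by (rule hstep[OF evr_1], simp only: hat.simps if_True if_False, (rule refl)?, (algebra | simp)+)

lemma eva_3: "evalhat m u [(GA,False)] = mk (1) (- (m)) 0 (m^2)"
  by (rule hstep[OF evalhat_Nil[of m u]], simp only: hat.simps if_True if_False, (rule refl)?, (algebra | simp)+)

lemma eva_2: "evalhat m u [(GA,False), (GA,False)] = mk (1) (- (m^3) - m) 0 (m^4)"
  by (rule hstep[OF eva_3], simp only: hat.simps if_True if_False, (rule refl)?, (algebra | simp)+)

lemma eva_1: "evalhat m u [(GA,False), (GA,False), (GA,False)] = mk (1) (- (m^5) - m^3 - m) 0 (m^6)"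
  by (rule hstep[OF eva_2], simp only: hat.simps if_True if_False, (rule refl)?, (algebra | simp)+)

lemma eva_0: "evalhat m u [(GA,False), (GA,False), (GA,False), (GA,False)] = mk (1) (- (m^7) - m^5 - m^3 - m) 0 (m^8)"
  by (rule hstep[OF eva_1], simp only: hat.simps if_True if_False, (rule refl)?, (algebra | simp)+)



definition phat :: "real \<Rightarrow> real \<Rightarrow> real" where
  "phat m u = (m^16*u + 4*m^14*u^2 - 3*m^14*u + 6*m^12*u^3 - 9*m^12*u^2 + 6*m^12*u - m^12 + 4*m^10*u^4 - 9*m^10*u^3 + 16*m^10*u^2 - 11*m^10*u + 3*m^10 + m^8*u^5 - 3*m^8*u^4 + 14*m^8*u^3 - 19*m^8*u^2 + 13*m^8*u - 3*m^8 + 4*m^6*u^4 - 9*m^6*u^3 + 16*m^6*u^2 - 11*m^6*u + 3*m^6 + 6*m^4*u^3 - 9*m^4*u^2 + 6*m^4*u - m^4 + 4*m^2*u^2 - 3*m^2*u + u)"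

definition lh11 :: "real \<Rightarrow> real \<Rightarrow> real" where
  "lh11 m u = (m^36*u^2 + 7*m^34*u^3 - 4*m^34*u^2 + 21*m^32*u^4 - 23*m^32*u^3 + 10*m^32*u^2 + 35*m^30*u^5 - 54*m^30*u^4 + 51*m^30*u^3 - 17*m^30*u^2 + 2*m^30*u + 35*m^28*u^6 - 65*m^28*u^5 + 105*m^28*u^4 - 72*m^28*u^3 + 29*m^28*u^2 - 4*m^28*u + 21*m^26*u^7 - 40*m^26*u^6 + 110*m^26*u^5 - 112*m^26*u^4 + 84*m^26*u^3 - 28*m^26*u^2 + 5*m^26*u + 7*m^24*u^8 - 9*m^24*u^7 + 60*m^24*u^6 - 68*m^24*u^5 + 88*m^24*u^4 - 44*m^24*u^3 + 17*m^24*u^2 - 3*m^24*u + m^24 + m^22*u^9 + 2*m^22*u^8 + 15*m^22*u^7 + 3*m^22*u^6 + 20*m^22*u^5 + 11*m^22*u^4 - 8*m^22*u^3 + 8*m^22*u^2 + m^20*u^9 + m^20*u^8 + 20*m^20*u^7 - 21*m^20*u^6 + 77*m^20*u^5 - 77*m^20*u^4 + 68*m^20*u^3 - 26*m^20*u^2 + 5*m^20*u + 6*m^18*u^8 - 10*m^18*u^7 + 61*m^18*u^6 - 87*m^18*u^5 + 121*m^18*u^4 - 80*m^18*u^3 + 32*m^18*u^2 - 5*m^18*u + 15*m^16*u^7 - 30*m^16*u^6 + 84*m^16*u^5 - 90*m^16*u^4 + 68*m^16*u^3 - 23*m^16*u^2 + 3*m^16*u + 20*m^14*u^6 - 35*m^14*u^5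 + 56*m^14*u^4 - 36*m^14*u^3 + 12*m^14*u^2 - m^14*u + 15*m^12*u^5 - 19*m^12*u^4 + 16*m^12*u^3 - 4*m^12*u^2 + 6*m^10*u^4 - 4*m^10*u^3 + m^10*u^2 + m^8*u^3)"

definition lh12 :: "real \<Rightarrow> real \<Rightarrow> real" where
  "lh12 m u = (- (m^43*u^2) - 7*m^41*u^3 + 4*m^41*u^2 - 21*m^39*u^4 + 22*m^39*u^3 - 11*m^39*u^2 + m^39*u - 35*m^37*u^5 + 48*m^37*u^4 - 54*m^37*u^3 + 25*m^37*u^2 - 5*m^37*u - 35*m^35*u^6 + 50*m^35*u^5 - 107*m^35*u^4 + 88*m^35*u^3 - 46*m^35*u^2 + 10*m^35*u - 21*m^33*u^7 + 20*m^33*u^6 - 110*m^33*u^5 + 114*m^33*u^4 - 109*m^33*u^3 + 52*m^33*u^2 - 14*m^33*u + m^33 - 7*m^31*u^8 - 6*m^31*u^7 - 65*m^31*u^6 + 39*m^31*u^5 - 90*m^31*u^4 + 59*m^31*u^3 - 40*m^31*u^2 + 13*m^31*u - 2*m^31 - m^29*u^9 - 8*m^29*u^8 - 26*m^29*u^7 - 43*m^29*u^6 - 7*m^29*u^5 - 52*m^29*u^4 + 16*m^29*u^3 - 5*m^29*u^2 - 2*m^29*u - 2*m^27*u^9 - 9*m^27*u^8 - 46*m^27*u^7 + 13*m^27*u^6 - 149*m^27*u^5 + 130*m^27*u^4 - 124*m^27*u^3 + 50*m^27*u^2 - 11*m^27*u - 2*m^25*u^9 - 16*m^25*u^8 - 10*m^25*u^7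 - 113*m^25*u^6 + 109*m^25*u^5 - 206*m^25*u^4 + 142*m^25*u^3 - 70*m^25*u^2 + 16*m^25*u - 2*m^25 - 2*m^23*u^9 - 9*m^23*u^8 - 40*m^23*u^7 + 2*m^23*u^6 - 124*m^23*u^5 + 109*m^23*u^4 - 117*m^23*u^3 + 55*m^23*u^2 - 14*m^23*u + m^23 - m^21*u^9 - 7*m^21*u^8 - 25*m^21*u^7 - 30*m^21*u^6 - 19*m^21*u^5 - 45*m^21*u^4 + 31*m^21*u^3 - 23*m^21*u^2 + 6*m^21*u - 6*m^19*u^8 - 5*m^19*u^7 - 51*m^19*u^6 + 23*m^19*u^5 - 53*m^19*u^4 + 13*m^19*u^3 - 2*m^19*u^2 - 15*m^17*u^7 + 10*m^17*u^6 - 64*m^17*u^5 + 47*m^17*u^4 - 38*m^17*u^3 + 10*m^17*u^2 - m^17*u - 20*m^15*u^6 + 20*m^15*u^5 - 43*m^15*u^4 + 23*m^15*u^3 - 8*m^15*u^2 + m^15*u - 15*m^13*u^5 + 13*m^13*u^4 - 13*m^13*u^3 + 3*m^13*u^2 - 6*m^11*u^4 + 3*m^11*u^3 - m^11*u^2 - m^9*u^3)"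

definition lh21 :: "real \<Rightarrow> real \<Rightarrow> real" where
  "lh21 m u = (m^35*u^3 + 7*m^33*u^4 - 4*m^33*u^3 + 21*m^31*u^5 - 23*m^31*u^4 + 11*m^31*u^3 - m^31*u^2 + 35*m^29*u^6 - 54*m^29*u^5 + 57*m^29*u^4 - 26*m^29*u^3 + 5*m^29*u^2 + 35*m^27*u^7 - 65*m^27*u^6 + 120*m^27*u^5 - 101*m^27*u^4 + 50*m^27*u^3 - 10*m^27*u^2 + 21*m^25*u^8 - 40*m^25*u^7 + 130*m^25*u^6 - 157*m^25*u^5 + 139*m^25*u^4 - 64*m^25*u^3 + 15*m^25*u^2 - m^25*u + 7*m^23*u^9 - 9*m^23*u^8 + 75*m^23*u^7 - 103*m^23*u^6 + 158*m^23*u^5 - 120*m^23*u^4 + 61*m^23*u^3 - 15*m^23*u^2 + 2*m^23*u + m^21*u^10 + 2*m^21*u^9 + 21*m^21*u^8 - 8*m^21*u^7 + 65*m^21*u^6 - 55*m^21*u^5 + 54*m^21*u^4 - 23*m^21*u^3 + 7*m^21*u^2 + m^19*u^10 + 2*m^19*u^9 + 21*m^19*u^8 - 8*m^19*u^7 + 65*m^19*u^6 - 55*m^19*u^5 + 54*m^19*u^4 - 23*m^19*u^3 + 7*m^19*u^2 + 7*m^17*u^9 - 9*m^17*u^8 + 75*m^17*u^7 - 103*m^17*u^6 + 158*m^17*u^5 - 120*m^17*u^4 + 61*m^17*u^3 - 15*m^17*u^2 + 2*m^17*u + 21*m^15*u^8 - 40*m^15*u^7 + 130*m^15*u^6 -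 157*m^15*u^5 + 139*m^15*u^4 - 64*m^15*u^3 + 15*m^15*u^2 - m^15*u + 35*m^13*u^7 - 65*m^13*u^6 + 120*m^13*u^5 - 101*m^13*u^4 + 50*m^13*u^3 - 10*m^13*u^2 + 35*m^11*u^6 - 54*m^11*u^5 + 57*m^11*u^4 - 26*m^11*u^3 + 5*m^11*u^2 + 21*m^9*u^5 - 23*m^9*u^4 + 11*m^9*u^3 - m^9*u^2 + 7*m^7*u^4 - 4*m^7*u^3 + m^5*u^3)"

definition lh22 :: "real \<Rightarrow> real \<Rightarrow> real" where
  "lh22 m u = (- (m^42*u^3) - 7*m^40*u^4 + 4*m^40*u^3 - 21*m^38*u^5 + 22*m^38*u^4 - 12*m^38*u^3 + 2*m^38*u^2 - 35*m^36*u^6 + 48*m^36*u^5 - 60*m^36*u^4 + 34*m^36*u^3 - 8*m^36*u^2 - 35*m^34*u^7 + 50*m^34*u^6 - 122*m^34*u^5 + 116*m^34*u^4 - 67*m^34*u^3 + 18*m^34*u^2 - m^34*u - 21*m^32*u^8 + 20*m^32*u^7 - 130*m^32*u^6 + 154*m^32*u^5 - 162*m^32*u^4 + 97*m^32*u^3 - 32*m^32*u^2 + 4*m^32*u - 7*m^30*u^9 - 6*m^30*u^8 - 80*m^30*u^7 + 64*m^30*u^6 - 154*m^30*u^5 + 146*m^30*u^4 - 101*m^30*u^3 + 37*m^30*u^2 - 6*m^30*u - m^28*u^10 - 8*m^28*u^9 - 32*m^28*u^8 - 42*m^28*u^7 - 48*m^28*u^6 + 11*m^28*u^5 - 49*m^28*u^4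 + 44*m^28*u^3 - 23*m^28*u^2 + 4*m^28*u - 2*m^26*u^10 - 10*m^26*u^9 - 52*m^26*u^8 - 4*m^26*u^7 - 154*m^26*u^6 + 129*m^26*u^5 - 116*m^26*u^4 + 41*m^26*u^3 - 6*m^26*u^2 - m^26*u - 2*m^24*u^10 - 18*m^24*u^9 - 17*m^24*u^8 - 143*m^24*u^7 + 136*m^24*u^6 - 274*m^24*u^5 + 220*m^24*u^4 - 120*m^24*u^3 + 33*m^24*u^2 - 7*m^24*u + m^24 - 2*m^22*u^10 - 11*m^22*u^9 - 54*m^22*u^8 + 2*m^22*u^7 - 197*m^22*u^6 + 219*m^22*u^5 - 239*m^22*u^4 + 133*m^22*u^3 - 42*m^22*u^2 + 4*m^22*u - m^20*u^10 - 9*m^20*u^9 - 33*m^20*u^8 - 62*m^20*u^7 + 8*m^20*u^6 - 131*m^20*u^5 + 133*m^20*u^4 - 96*m^20*u^3 + 32*m^20*u^2 - 5*m^20*u - 7*m^18*u^9 - 12*m^18*u^8 - 70*m^18*u^7 + 3*m^18*u^6 - 32*m^18*u^5 - 29*m^18*u^4 + 30*m^18*u^3 - 12*m^18*u^2 + m^18*u - 21*m^16*u^8 + 5*m^16*u^7 - 100*m^16*u^6 + 70*m^16*u^5 - 51*m^16*u^4 + 6*m^16*u^3 + m^16*u^2 + m^16*u - 35*m^14*u^7 + 30*m^14*u^6 - 87*m^14*u^5 + 60*m^14*u^4 - 24*m^14*u^3 + 2*m^14*u^2 - 35*m^12*u^6 + 33*m^12*u^5 - 41*m^12*u^4 + 18*m^12*u^3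 - 3*m^12*u^2 - 21*m^10*u^5 + 16*m^10*u^4 - 8*m^10*u^3 + m^10*u^2 - 7*m^8*u^4 + 3*m^8*u^3 - m^6*u^3)"

definition q12 :: "real \<Rightarrow> real \<Rightarrow> real" where
  "q12 m u = (m^29*u + 4*m^27*u^2 - 2*m^27*u + 6*m^25*u^3 - 4*m^25*u^2 + 3*m^25*u + 4*m^23*u^4 + 6*m^23*u^2 - 2*m^23*u + m^23 + m^21*u^5 + 4*m^21*u^4 + 5*m^21*u^3 + 2*m^21*u^2 + m^21*u + 2*m^19*u^5 + 4*m^19*u^4 + 10*m^19*u^3 - 3*m^19*u^2 + 4*m^19*u - m^19 + 2*m^17*u^5 + 8*m^17*u^4 + m^17*u^3 + 8*m^17*u^2 - m^17*u + 2*m^15*u^5 + 5*m^15*u^4 + 8*m^15*u^3 - 2*m^15*u^2 + 4*m^15*u + m^13*u^5 + 4*m^13*u^4 + 5*m^13*u^3 + 2*m^13*u^2 + 3*m^11*u^4 + 2*m^11*u^3 + 2*m^11*u^2 + 3*m^9*u^3 + m^7*u^2)"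

definition q21 :: "real \<Rightarrow> real \<Rightarrow> real" where
  "q21 m u = (m^19*u^2 + 3*m^17*u^3 - m^17*u^2 + 3*m^15*u^4 - m^15*u^3 + 2*m^15*u^2 + m^13*u^5 + m^13*u^4 + 3*m^13*u^3 + m^13*u + m^11*u^5 + m^11*u^4 + 3*m^11*u^3 + m^11*u + 3*m^9*u^4 - m^9*u^3 + 2*m^9*u^2 + 3*m^7*u^3 - m^7*u^2 + m^5*u^2)"

definition q22 :: "real \<Rightarrow> real \<Rightarrow> real" where
  "q22 m u = (- (m^26*u^2) - 3*m^24*u^3 + m^24*u^2 - 3*m^22*u^4 - 3*m^22*u^2 + m^22*u - m^20*u^5 - 3*m^20*u^4 - 5*m^20*u^3 + m^20*u^2 - m^20*u - 2*m^18*u^5 - 4*m^18*u^4 - 7*m^18*u^3 + m^18 - 2*m^16*u^5 - 8*m^16*u^4 - m^16*u^3 - 5*m^16*u^2 - m^16*u + m^16 - 2*m^14*u^5 - 5*m^14*u^4 - 8*m^14*u^3 + 2*m^14*u^2 - 3*m^14*u - m^12*u^5 - 4*m^12*u^4 - 5*m^12*u^3 - 2*m^12*u^2 - 3*m^10*u^4 - 2*m^10*u^3 - 2*m^10*u^2 - 3*m^8*u^3 - m^6*u^2)"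

definition r22 :: "real \<Rightarrow> real \<Rightarrow> real" where
  "r22 m u = (- ((m^2)^17*u) - 2*(m^2)^16*u^2 + 2*(m^2)^16*u - (m^2)^15*u^3 + 2*(m^2)^15*u^2 - 3*(m^2)^15*u + (m^2)^15 - (m^2)^14*u^2 + 2*(m^2)^14*u - 2*(m^2)^14 + (m^2)^13*u^3 - 2*(m^2)^13*u^2 + (m^2)^13*u + 3*(m^2)^12*u^2 - 4*(m^2)^12*u + (m^2)^12 + 3*(m^2)^11*u - 2*(m^2)^11 + (m^2)^10)"

lemma evalhat_append: "evalhat m u (v @ w) = evalhat m u v ** evalhat m u w"
  by (induction v) (simp_all add: mat1_mk[symmetric] matrix_mul_lid matrix_mul_assoc)

lemma lam_hat: "evalhat m u ([(GB,True), (GA,True), (GB,True), (GA,False), (GB,False), (GA,False), (GB,False), (GA,True), (GB,True), (GA,True)] @ [(GA,True), (GB,True), (GA,True), (GB,False), (GA,False), (GB,False), (GA,False), (GB,True), (GA,True), (GB,True)] @ [(GA,False), (GA,False), (GA,False), (GA,False)]) = mk (lh11 m u) (lh12 m u) (lh21 m u) (lh22 m u)"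
  unfolding evalhat_append evw_0 evr_0 eva_0 mk_mult mk_eq_iff lh11_def lh12_def lh21_def lh22_def
  by (intro conjI; algebra)

lemma knot_rel:
  assumes "phat m u = 0"
  shows "hat m u (GA,True) ** evalhat m u [(GB,True), (GA,True), (GB,True), (GA,False), (GB,False), (GA,False), (GB,False), (GA,True), (GB,True), (GA,True)] = evalhat m u [(GB,True), (GA,True), (GB,True), (GA,False), (GB,False), (GA,False), (GB,False), (GA,True), (GB,True), (GA,True)] ** hat m u (GB,True)"
proof -
  have c1: "(m^2) * (m^17*u + 3*m^15*u^2 - 2*m^15*u + 3*m^13*u^3 - 4*m^13*u^2 + 4*m^13*u - m^13 + m^11*u^4 - 2*m^11*u^3 + 7*m^11*u^2 - 5*m^11*u + 2*m^11 + 3*m^9*u^3 - 4*m^9*u^2 + 5*m^9*u - m^9 + 3*m^7*u^2 - 2*m^7*u + m^7 + m^5*u) + m * (m^16*u^2 + 3*m^14*u^3 - 2*m^14*u^2 + 3*m^12*u^4 - 4*m^12*u^3 + 5*m^12*u^2 - 2*m^12*u + m^10*u^5 - 2*m^10*u^4 + 9*m^10*u^3 - 8*m^10*u^2 + 3*m^10*u + 4*m^8*u^4 - 6*m^8*u^3 + 9*m^8*u^2 - 4*m^8*u + m^8 + 6*m^6*u^3 - 6*m^6*u^2 + 3*m^6*u + 4*m^4*u^2 - 2*m^4*u + m^2*u) = (m^18*u + 3*m^16*u^2 - 2*m^16*u + 3*m^14*u^3 - 4*m^14*u^2 + 3*m^14*u + m^12*u^4 - 2*m^12*u^3 + 5*m^12*u^2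 - 2*m^12*u + m^12 + 2*m^10*u^3 - 2*m^10*u^2 + 2*m^10*u + m^8*u^2) * 0 + (m^17*u + 3*m^15*u^2 - 2*m^15*u + 3*m^13*u^3 - 4*m^13*u^2 + 4*m^13*u - m^13 + m^11*u^4 - 2*m^11*u^3 + 7*m^11*u^2 - 5*m^11*u + 2*m^11 + 3*m^9*u^3 - 4*m^9*u^2 + 5*m^9*u - m^9 + 3*m^7*u^2 - 2*m^7*u + m^7 + m^5*u) * 1 + m^3 * phat m u"
    unfolding phat_def by algebra
  have c2: "0 * (m^18*u + 3*m^16*u^2 - 2*m^16*u + 3*m^14*u^3 - 4*m^14*u^2 + 3*m^14*u + m^12*u^4 - 2*m^12*u^3 + 5*m^12*u^2 - 2*m^12*u + m^12 + 2*m^10*u^3 - 2*m^10*u^2 + 2*m^10*u + m^8*u^2) + 1 * (m^17*u^2 + 3*m^15*u^3 - 2*m^15*u^2 + 3*m^13*u^4 - 4*m^13*u^3 + 4*m^13*u^2 - m^13*u + m^11*u^5 - 2*m^11*u^4 + 7*m^11*u^3 - 5*m^11*u^2 + 2*m^11*u + 3*m^9*u^4 - 4*m^9*u^3 + 5*m^9*u^2 - m^9*u + 3*m^7*u^3 - 2*m^7*u^2 + m^7*u + m^5*u^2) = (m^17*u^2 + 3*m^15*u^3 - 2*m^15*u^2 + 3*m^13*u^4 - 4*m^13*u^3 + 4*m^13*u^2 - m^13*u + m^11*u^5 - 2*m^11*u^4 + 7*m^11*u^3 - 5*m^11*u^2 + 2*m^11*u + 3*m^9*u^4 - 4*m^9*u^3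 + 5*m^9*u^2 - m^9*u + 3*m^7*u^3 - 2*m^7*u^2 + m^7*u + m^5*u^2) * (m^2) + (m^16*u^2 + 3*m^14*u^3 - 2*m^14*u^2 + 3*m^12*u^4 - 4*m^12*u^3 + 5*m^12*u^2 - 2*m^12*u + m^10*u^5 - 2*m^10*u^4 + 9*m^10*u^3 - 8*m^10*u^2 + 3*m^10*u + 4*m^8*u^4 - 6*m^8*u^3 + 9*m^8*u^2 - 4*m^8*u + m^8 + 6*m^6*u^3 - 6*m^6*u^2 + 3*m^6*u + 4*m^4*u^2 - 2*m^4*u + m^2*u) * (m*u) - m^3 * u * phat m u"
    unfolding phat_def by algebra
  have c3: "(m^2) * (m^18*u + 3*m^16*u^2 - 2*m^16*u + 3*m^14*u^3 - 4*m^14*u^2 + 3*m^14*u + m^12*u^4 - 2*m^12*u^3 + 5*m^12*u^2 - 2*m^12*u + m^12 + 2*m^10*u^3 - 2*m^10*u^2 + 2*m^10*u + m^8*u^2) + m * (m^17*u^2 + 3*m^15*u^3 - 2*m^15*u^2 + 3*m^13*u^4 - 4*m^13*u^3 + 4*m^13*u^2 - m^13*u + m^11*u^5 - 2*m^11*u^4 + 7*m^11*u^3 - 5*m^11*u^2 + 2*m^11*u + 3*m^9*u^4 - 4*m^9*u^3 + 5*m^9*u^2 - m^9*u + 3*m^7*u^3 - 2*m^7*u^2 + m^7*u + m^5*u^2) = (m^18*u + 3*m^16*u^2 - 2*m^16*u + 3*m^14*u^3 - 4*m^14*u^2 + 3*m^14*u + m^12*u^4 - 2*m^12*u^3 + 5*m^12*u^2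 - 2*m^12*u + m^12 + 2*m^10*u^3 - 2*m^10*u^2 + 2*m^10*u + m^8*u^2) * (m^2) + (m^17*u + 3*m^15*u^2 - 2*m^15*u + 3*m^13*u^3 - 4*m^13*u^2 + 4*m^13*u - m^13 + m^11*u^4 - 2*m^11*u^3 + 7*m^11*u^2 - 5*m^11*u + 2*m^11 + 3*m^9*u^3 - 4*m^9*u^2 + 5*m^9*u - m^9 + 3*m^7*u^2 - 2*m^7*u + m^7 + m^5*u) * (m*u)"
    by algebra
  have c4: "0 * (m^17*u + 3*m^15*u^2 - 2*m^15*u + 3*m^13*u^3 - 4*m^13*u^2 + 4*m^13*u - m^13 + m^11*u^4 - 2*m^11*u^3 + 7*m^11*u^2 - 5*m^11*u + 2*m^11 + 3*m^9*u^3 - 4*m^9*u^2 + 5*m^9*u - m^9 + 3*m^7*u^2 - 2*m^7*u + m^7 + m^5*u) + 1 * (m^16*u^2 + 3*m^14*u^3 - 2*m^14*u^2 + 3*m^12*u^4 - 4*m^12*u^3 + 5*m^12*u^2 - 2*m^12*u + m^10*u^5 - 2*m^10*u^4 + 9*m^10*u^3 - 8*m^10*u^2 + 3*m^10*u + 4*m^8*u^4 - 6*m^8*u^3 + 9*m^8*u^2 - 4*m^8*u + m^8 + 6*m^6*u^3 - 6*m^6*u^2 + 3*m^6*u + 4*m^4*u^2 - 2*m^4*u + m^2*u) = (m^17*u^2 + 3*m^15*u^3 - 2*m^15*u^2 + 3*m^13*u^4 - 4*m^13*u^3 + 4*m^13*u^2 - m^13*u + m^11*u^5 - 2*m^11*u^4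 + 7*m^11*u^3 - 5*m^11*u^2 + 2*m^11*u + 3*m^9*u^4 - 4*m^9*u^3 + 5*m^9*u^2 - m^9*u + 3*m^7*u^3 - 2*m^7*u^2 + m^7*u + m^5*u^2) * 0 + (m^16*u^2 + 3*m^14*u^3 - 2*m^14*u^2 + 3*m^12*u^4 - 4*m^12*u^3 + 5*m^12*u^2 - 2*m^12*u + m^10*u^5 - 2*m^10*u^4 + 9*m^10*u^3 - 8*m^10*u^2 + 3*m^10*u + 4*m^8*u^4 - 6*m^8*u^3 + 9*m^8*u^2 - 4*m^8*u + m^8 + 6*m^6*u^3 - 6*m^6*u^2 + 3*m^6*u + 4*m^4*u^2 - 2*m^4*u + m^2*u) * 1"
    by algebra
  show ?thesis
    unfolding evw_0 hat.simps if_True mk_mult mk_eq_iff using c1 c2 c3 c4 assms by simp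
qed

lemma lam21: "lh21 m u = q21 m u * phat m u"
  unfolding lh21_def q21_def phat_def by algebra
lemma lam12: "(1 - m^2) * lh12 m u - m * (lh22 m u - lh11 m u) = q12 m u * phat m u"
  unfolding lh11_def lh12_def lh22_def q12_def phat_def by algebra
lemma lam22: "lh22 m u = q22 m u * phat m u + r22 m u"
  unfolding lh22_def q22_def r22_def phat_def by algebra



definition Nz :: "real \<Rightarrow> real" where "Nz z = (z^5 - 3*z^4 + 2*z^3 - z^2 + 3*z - 1)"

definition Dz :: "real \<Rightarrow> real" where "Dz z = (z^4 - 3*z^3 + 2*z^2)"

definition na :: "real \<Rightarrow> real" where "na z = (z^8 - 6*z^7 + 12*z^6 - 7*z^5 - 7*z^4 + 15*z^3 - 13*z^2 + 6*z - 1)"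

definition da :: "real \<Rightarrow> real" where "da z = (z^6 - 4*z^5 + 4*z^4)"

definition nb :: "real \<Rightarrow> real" where "nb z = (- (z^10) + 8*z^9 - 25*z^8 + 38*z^7 - 24*z^6 - 12*z^5 + 38*z^4 - 38*z^3 + 24*z^2 - 8*z + 1)"

definition db :: "real \<Rightarrow> real" where "db z = (z^9 - 6*z^8 + 12*z^7 - 8*z^6)"

lemma phat_z:
  assumes "m \<noteq> 0" "u = z - (m^2 + 1/m^2)"
  shows "phat m u = m^8 * (Nz z - (m^2 + 1/m^2) * Dz z)"
proof -
  define mi where "mi = 1/m"
  have h: "m * mi = 1" using assms(1) by (simp add: mi_def)
  have hu: "u = z - (m^2 + mi^2)" using assms(2) by (simp add: mi_def power_one_over)
  show ?thesis unfolding mi_def[symmetric] power_one_over[symmetric] using h hu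
    unfolding phat_def Nz_def Dz_def by algebra
qed

definition e4 :: "real \<Rightarrow> real \<Rightarrow> real" where "e4 t z = (t^20*z^2 - 2*t^20*z + t^20 - t^19*z^3 + 2*t^19*z^2 - t^19 - t^18*z^2 + 2*t^18*z - t^18 + t^17*z^3 - 2*t^17*z^2)"

lemma r22_t:
  assumes "m^2 = t" "u * t = t*z - t^2 - 1"
  shows "t^4 * r22 m u = e4 t z"
  unfolding r22_def assms(1) e4_def using assms(2) by algebra

lemma cert22: "(Dz z)^3 * (da z * db z * e4 t z - t^16 * (na z * db z + nb z * da z * t)) = (t^18*z^25 - 18*t^18*z^24 + 146*t^18*z^23 - 704*t^18*z^22 + 2241*t^18*z^21 - 4942*t^18*z^20 + 7700*t^18*z^19 - 8472*t^18*z^18 + 6448*t^18*z^17 - 3232*t^18*z^16 + 960*t^18*z^15 - 128*t^18*z^14 + t^17*z^24 - 18*t^17*z^23 + 147*t^17*z^22 - 720*t^17*z^21 + 2355*t^17*z^20 - 5418*t^17*z^19 + 8989*t^17*z^18 - 10836*t^17*z^17 + 9420*t^17*z^16 - 5760*t^17*z^15 + 2352*t^17*z^14 - 576*t^17*z^13 + 64*t^17*z^12 - t^16*z^25 + 18*t^16*z^24 - 145*t^16*z^23 + 687*t^16*z^22 - 2109*t^16*z^21 + 4320*t^16*z^20 - 5706*t^16*z^19 + 3853*t^16*z^18 + 1552*t^16*z^17 - 7300*t^16*z^16 + 9585*t^16*z^15 - 7770*t^16*z^14 + 4264*t^16*z^13 - 1552*t^16*z^12 + 336*t^16*z^11 -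 32*t^16*z^10) * (Dz z * t^2 - Nz z * t + Dz z)"
  unfolding Nz_def Dz_def na_def nb_def da_def db_def e4_def by algebra



lemma P_shift: "na z * z^4*(z-1)^4*(z-2)^2 + nb z * (Nz z - Dz z) * (z-1)^3 - (Nz z)^4/2 = ((1/2) + 8*e - 14*e^2 - 870*e^3 - (14209/2)*e^4 - 33001*e^5 - 106544*e^6 - 256601*e^7 - (948269/2)*e^8 - 680021*e^9 - 761430*e^10 - 667899*e^11 - 459615*e^12 - 247806*e^13 - 104126*e^14 - 33725*e^15 - (16515/2)*e^16 - 1479*e^17 - 183*e^18 - 14*e^19 - (1/2)*e^20)"
  if "e = z - 2" for z e :: real
  using that unfolding na_def nb_def Nz_def Dz_def by algebra

lemma Pe_pos: fixes e :: real assumes "0 \<le> e" "e \<le> 1/50" shows "((1/2) + 8*e - 14*e^2 - 870*e^3 - (14209/2)*e^4 - 33001*e^5 - 106544*e^6 - 256601*e^7 - (948269/2)*e^8 - 680021*e^9 - 761430*e^10 - 667899*e^11 - 459615*e^12 - 247806*e^13 - 104126*e^14 - 33725*e^15 - (16515/2)*e^16 - 1479*e^17 - 183*e^18 - 14*e^19 - (1/2)*e^20) \<ge> 0"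
proof -
  have p: "e^k \<le> (1/50)^k" for k :: nat using assms by (intro power_mono) auto
  have p1: "e \<le> 1/50" using p[of 1] by (simp add: power_one_over)
  have q1: "0 \<le> e" using assms by simp
  have p2: "e^2 \<le> 1/2500" using p[of 2] by (simp add: power_one_over)
  have q2: "0 \<le> e^2" using assms by simp
  have p3: "e^3 \<le> 1/125000" using p[of 3] by (simp add: power_one_over)
  have q3: "0 \<le> e^3" using assms by simp
  have p4: "e^4 \<le> 1/6250000" using p[of 4] by (simp add: power_one_over)
  have q4: "0 \<le> e^4" using assms by simp
  have p5: "e^5 \<le> 1/312500000" using p[of 5] by (simp add: power_one_over)
  have q5: "0 \<le> e^5" using assms by simp
  have p6: "e^6 \<le> 1/15625000000" using p[of 6] by (simp add: power_one_over)
  have q6: "0 \<le> e^6" using assms by simp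
  have p7: "e^7 \<le> 1/781250000000" using p[of 7] by (simp add: power_one_over)
  have q7: "0 \<le> e^7" using assms by simp
  have p8: "e^8 \<le> 1/39062500000000" using p[of 8] by (simp add: power_one_over)
  have q8: "0 \<le> e^8" using assms by simp
  have p9: "e^9 \<le> 1/1953125000000000" using p[of 9] by (simp add: power_one_over)
  have q9: "0 \<le> e^9" using assms by simp
  have p10: "e^10 \<le> 1/97656250000000000" using p[of 10] by (simp add: power_one_over)
  have q10: "0 \<le> e^10" using assms by simp
  have p11: "e^11 \<le> 1/4882812500000000000" using p[of 11] by (simp add: power_one_over)
  have q11: "0 \<le> e^11" using assms by simp
  have p12: "e^12 \<le> 1/244140625000000000000" using p[of 12] by (simp add: power_one_over)
  have q12: "0 \<le> e^12" using assms by simp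
  have p13: "e^13 \<le> 1/12207031250000000000000" using p[of 13] by (simp add: power_one_over)
  have q13: "0 \<le> e^13" using assms by simp
  have p14: "e^14 \<le> 1/610351562500000000000000" using p[of 14] by (simp add: power_one_over)
  have q14: "0 \<le> e^14" using assms by simp
  have p15: "e^15 \<le> 1/30517578125000000000000000" using p[of 15] by (simp add: power_one_over)
  have q15: "0 \<le> e^15" using assms by simp
  have p16: "e^16 \<le> 1/1525878906250000000000000000" using p[of 16] by (simp add: power_one_over)
  have q16: "0 \<le> e^16" using assms by simp
  have p17: "e^17 \<le> 1/76293945312500000000000000000" using p[of 17] by (simp add: power_one_over)
  have q17: "0 \<le> e^17" using assms by simp
  have p18: "e^18 \<le> 1/3814697265625000000000000000000" using p[of 18] by (simp add: power_one_over)
  have q18: "0 \<le> e^18" using assms by simp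
  have p19: "e^19 \<le> 1/190734863281250000000000000000000" using p[of 19] by (simp add: power_one_over)
  have q19: "0 \<le> e^19" using assms by simp
  have p20: "e^20 \<le> 1/9536743164062500000000000000000000" using p[of 20] by (simp add: power_one_over)
  have q20: "0 \<le> e^20" using assms by simp
  show ?thesis using p1 q1 p2 q2 p3 q3 p4 q4 p5 q5 p6 q6 p7 q7 p8 q8 p9 q9 p10 q10 p11 q11 p12 q12 p13 q13 p14 q14 p15 q15 p16 q16 p17 q17 p18 q18 p19 q19 p20 q20 by linarith
qed

lemma nb_shift: "nb z = (1 + 16*e + 68*e^2 + 74*e^3 - 66*e^4 - 244*e^5 - 276*e^6 - 170*e^7 - 61*e^8 - 12*e^9 - e^10)" if "e = z - 2" for z e :: real
  using that unfolding nb_def by algebra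

lemma nbe_pos: fixes e :: real assumes "0 \<le> e" "e \<le> 1/50" shows "(1 + 16*e + 68*e^2 + 74*e^3 - 66*e^4 - 244*e^5 - 276*e^6 - 170*e^7 - 61*e^8 - 12*e^9 - e^10) > 0"
proof -
  have p: "e^k \<le> (1/50)^k" for k :: nat using assms by (intro power_mono) auto
  have p1: "e \<le> 1/50" using p[of 1] by (simp add: power_one_over)
  have q1: "0 \<le> e" using assms by simp
  have p2: "e^2 \<le> 1/2500" using p[of 2] by (simp add: power_one_over)
  have q2: "0 \<le> e^2" using assms by simp
  have p3: "e^3 \<le> 1/125000" using p[of 3] by (simp add: power_one_over)
  have q3: "0 \<le> e^3" using assms by simp
  have p4: "e^4 \<le> 1/6250000" using p[of 4] by (simp add: power_one_over)
  have q4: "0 \<le> e^4" using assms by simp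
  have p5: "e^5 \<le> 1/312500000" using p[of 5] by (simp add: power_one_over)
  have q5: "0 \<le> e^5" using assms by simp
  have p6: "e^6 \<le> 1/15625000000" using p[of 6] by (simp add: power_one_over)
  have q6: "0 \<le> e^6" using assms by simp
  have p7: "e^7 \<le> 1/781250000000" using p[of 7] by (simp add: power_one_over)
  have q7: "0 \<le> e^7" using assms by simp
  have p8: "e^8 \<le> 1/39062500000000" using p[of 8] by (simp add: power_one_over)
  have q8: "0 \<le> e^8" using assms by simp
  have p9: "e^9 \<le> 1/1953125000000000" using p[of 9] by (simp add: power_one_over)
  have q9: "0 \<le> e^9" using assms by simp
  have p10: "e^10 \<le> 1/97656250000000000" using p[of 10] by (simp add: power_one_over)
  have q10: "0 \<le> e^10" using assms by simp
  show ?thesis using p1 q1 p2 q2 p3 q3 p4 q4 p5 q5 p6 q6 p7 q7 p8 q8 p9 q9 p10 q10 by linarith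
qed


lemma tbw: "tb_word 11 3 = [(GB,True),(GA,True),(GB,True),(GA,False),(GB,False),(GA,False),(GB,False),(GA,True),(GB,True),(GA,True)]"
  by (simp add: tb_word_def tb_sign_def upt_rec)

lemma tbs: "tb_sigma 11 3 = 2"
  unfolding tb_sigma_def tb_sign_def by (simp add: sum.atLeast_Suc_lessThan)

lemma tb_rel: "tb_relator 11 3 = [(GA,True)] @ tb_word 11 3 @ [(GB,False)] @ inv_word (tb_word 11 3)"
  by (simp add: tb_relator_def)

lemma tb_long: "tb_longitude 11 3 = [(GB,True),(GA,True),(GB,True),(GA,False),(GB,False),(GA,False),(GB,False),(GA,True),(GB,True),(GA,True)] @
   [(GA,True),(GB,True),(GA,True),(GB,False),(GA,False),(GB,False),(GA,False),(GB,True),(GA,True),(GB,True)] @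
   [(GA,False),(GA,False),(GA,False),(GA,False)]"
  unfolding tb_longitude_def tbw tbs by (simp add: word_pow_def inv_word_def numeral_eq_Suc)

lemma det_Am: "m \<noteq> 0 \<Longrightarrow> m * (1/m) - 1 * 0 = (1::real)" by simp
lemma det_Bm: "m \<noteq> 0 \<Longrightarrow> m * (1/m) - 0 * u = (1::real)" by simp

lemma letter_inv:
  assumes "m \<noteq> 0"
  shows "letter_mat (Am m) (Bm m u) (g, e) ** letter_mat (Am m) (Bm m u) (g, \<not> e) = mat 1"
  using assms
  by (cases g; cases e) (simp_all add: Am_def Bm_def matrix_inv_mk mk_mult mat1_mk mk_eq_iff)

lemma det_letter:
  assumes "m \<noteq> 0"
  shows "det (letter_mat (Am m) (Bm m u) l) = 1"
  using assms
  by (cases l; case_tac a; case_tac b) (simp_all add: Am_def Bm_def matrix_inv_mk det_mk)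

lemma det_eval:
  assumes "m \<noteq> 0"
  shows "det (eval_word (Am m) (Bm m u) w) = 1"
  by (induction w) (simp_all add: det_mul det_letter[OF assms] det_I)

lemma inv_word_Cons: "inv_word (l # w) = inv_word w @ [(fst l, \<not> snd l)]"
  by (cases l) (simp add: inv_word_def)

lemma eval_inv:
  assumes "m \<noteq> 0"
  shows "eval_word (Am m) (Bm m u) w ** eval_word (Am m) (Bm m u) (inv_word w) = mat 1"
proof (induction w)
  case Nil
  then show ?case by (simp add: inv_word_def matrix_mul_lid)
next
  case (Cons l w)
  obtain g e where l: "l = (g, e)" by force
  let ?L = "letter_mat (Am m) (Bm m u) (g, e)" and ?L' = "letter_mat (Am m) (Bm m u) (g, \<not> e)"
  let ?W = "eval_word (Am m) (Bm m u) w" and ?W' = "eval_word (Am m) (Bm m u) (inv_word w)"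
  have "eval_word (Am m) (Bm m u) (l # w) ** eval_word (Am m) (Bm m u) (inv_word (l # w))
        = ?L ** ((?W ** ?W') ** ?L')"
    by (simp add: l inv_word_Cons eval_word_append matrix_mul_rid matrix_mul_assoc)
  also have "\<dots> = mat 1" using Cons.IH letter_inv[OF assms] by (simp add: matrix_mul_lid)
  finally show ?case .
qed

lemma hat_eq_eval:
  assumes "m \<noteq> 0" "evalhat m u v1 = evalhat m u v2" "length v1 = length v2"
  shows "eval_word (Am m) (Bm m u) v1 = eval_word (Am m) (Bm m u) v2"
proof -
  obtain a b c d where H: "evalhat m u v1 = mk a b c d" using mk_entries by blast
  show ?thesis using eval_hat[OF assms(1) H] eval_hat[OF assms(1), of u v2 a b c d] H assms by simp
qed

abbreviation "wK \<equiv> [(GB,True),(GA,True),(GB,True),(GA,False),(GB,False),(GA,False),(GB,False),(GA,True),(GB,True),(GA,True)]"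

lemma AW_WB:
  assumes "m \<noteq> 0" "phat m u = 0"
  shows "letter_mat (Am m) (Bm m u) (GA,True) ** eval_word (Am m) (Bm m u) wK
       = eval_word (Am m) (Bm m u) wK ** letter_mat (Am m) (Bm m u) (GB,True)"
proof -
  have "evalhat m u ((GA,True) # wK) = evalhat m u (wK @ [(GB,True)])"
    using knot_rel[OF assms(2)] by (simp only: evalhat_Cons evalhat_append evalhat_Nil mat1_mk[symmetric] matrix_mul_rid)
  then have "eval_word (Am m) (Bm m u) ((GA,True) # wK) = eval_word (Am m) (Bm m u) (wK @ [(GB,True)])"
    by (rule hat_eq_eval[OF assms(1)]) simp
  then show ?thesis by (simp only: eval_word_append eval_word_Cons eval_word_Nil matrix_mul_rid)
qed

lemma relator_ok:
  assumes "m \<noteq> 0" "phat m u = 0"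
  shows "eval_word (Am m) (Bm m u) (tb_relator 11 3) = mat 1"
proof -
  let ?A = "letter_mat (Am m) (Bm m u) (GA,True)" and ?B = "letter_mat (Am m) (Bm m u) (GB,True)"
    and ?Bi = "letter_mat (Am m) (Bm m u) (GB,False)"
  let ?W = "eval_word (Am m) (Bm m u) wK" and ?W' = "eval_word (Am m) (Bm m u) (inv_word wK)"
  have "eval_word (Am m) (Bm m u) (tb_relator 11 3) = (?A ** ?W) ** (?Bi ** ?W')"
    by (simp add: tb_rel tbw eval_word_append matrix_mul_rid matrix_mul_assoc)
  also have "\<dots> = ?W ** ((?B ** ?Bi) ** ?W')" using AW_WB[OF assms] by (simp add: matrix_mul_assoc)
  also have "\<dots> = mat 1" using letter_inv[OF assms(1), of u GB True] eval_inv[OF assms(1), of u wK]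
    by (simp add: matrix_mul_lid)
  finally show ?thesis .
qed

lemma longitude_eval:
  assumes "m \<noteq> 0"
  shows "eval_word (Am m) (Bm m u) (tb_longitude 11 3) = mk (lh11 m u / m^24) (lh12 m u / m^24) (lh21 m u / m^24) (lh22 m u / m^24)"
proof -
  note E = eval_hat[OF assms lam_hat]
  have len: "length (wK @ [(GA,True),(GB,True),(GA,True),(GB,False),(GA,False),(GB,False),(GA,False),(GB,True),(GA,True),(GB,True)] @
   [(GA,False),(GA,False),(GA,False),(GA,False)]) = 24" by simp
  show ?thesis unfolding tb_long using E unfolding len .
qed



definition sf :: "real \<Rightarrow> real" where "sf z = Nz z / Dz z"
definition tf :: "real \<Rightarrow> real" where "tf z = (sf z + sqrt ((sf z)^2 - 4)) / 2"
definition mf :: "real \<Rightarrow> real" where "mf z = sqrt (tf z)"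
definition uf :: "real \<Rightarrow> real" where "uf z = z - sf z"
definition z0 :: real where "z0 = (3 + sqrt 5) / 2"

lemma z0_props: "2 < z0" "z0 < 3" "z0^2 - 3*z0 + 1 = 0"
proof -
  have a: "sqrt 1 < sqrt 5" by (rule real_sqrt_less_mono) simp
  have b: "sqrt 5 < sqrt 9" by (rule real_sqrt_less_mono) simp
  have c: "sqrt 9 = 3" by (simp add: real_sqrt_eq_iff)
  have s5: "(sqrt 5)^2 = 5" by simp
  show "2 < z0" using a by (simp add: z0_def)
  show "z0 < 3" using b c by (simp add: z0_def)
  have h: "((3 + x)/2)^2 - 3*((3+x)/2) + 1 = (x*x - 5)/(4::real)" for x
    by (simp add: power2_eq_square field_simps)
  have F: "z0^2 - 3*z0 + 1 = (sqrt 5 * sqrt 5 - 5)/4" unfolding z0_def by (rule h)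
  have "sqrt 5 * sqrt 5 = (5::real)" by simp
  from F[unfolded this] show "z0^2 - 3*z0 + 1 = 0" by simp
qed

lemma Dz_factor: "Dz z = z^2*(z-1)*(z-2)" unfolding Dz_def by algebra
lemma Nz_zDz: "Nz z - z * Dz z = -(z^2 - 3*z + 1)" unfolding Nz_def Dz_def by algebra
lemma N2D: "Nz z - 2 * Dz z = 1 - e + 3*e^2 + 8*e^3 + 5*e^4 + e^5" if "e = z - 2" for z e :: real
  using that unfolding Nz_def Dz_def by algebra
lemma Nshift: "Nz z = 1 + 7*e + 19*e^2 + 18*e^3 + 7*e^4 + e^5" if "e = z - 2" for z e :: real
  using that unfolding Nz_def by algebra
lemma Dshift: "Dz z = 4*e + 8*e^2 + 5*e^3 + e^4" if "e = z - 2" for z e :: real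
  using that unfolding Dz_def by algebra
lemma da_factor: "da z = z^4*(z-2)^2" unfolding da_def by algebra
lemma db_factor: "db z = z^6*(z-2)^3" unfolding db_def by algebra

lemma Dz_pos: "2 < z \<Longrightarrow> Dz z > 0"
  unfolding Dz_factor by simp

lemma sf_gt2:
  assumes "2 < z" "z < 3" shows "sf z > 2"
proof -
  define e where "e = z - 2"
  have e: "0 < e" "e < 1" using assms by (auto simp: e_def)
  have "Nz z - 2 * Dz z = 1 - e + 3*e^2 + 8*e^3 + 5*e^4 + e^5" using N2D e_def by blast
  moreover have "0 \<le> 3*e^2 + 8*e^3 + 5*e^4 + e^5" using e by simp
  ultimately have "Nz z > 2 * Dz z" using e by linarith
  then show ?thesis using Dz_pos[OF assms(1)] by (simp add: sf_def field_simps)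
qed

lemma tf_facts:
  assumes "s > 2"
  defines "t \<equiv> (s + sqrt (s^2 - 4)) / 2"
  shows "t > 1" "t + 1/t = s" "t \<le> s" "t \<ge> s - 1"
proof -
  define r where "r = sqrt (s^2 - 4)"
  have s4: "(2::real)^2 < s^2" using assms(1) by (intro power_strict_mono) auto
  have s4': "0 \<le> s^2 - 4" using s4 by (simp add: power2_eq_square)
  have r2: "r^2 = s^2 - 4" unfolding r_def using real_sqrt_pow2[OF s4'] .
  have r0: "r \<ge> 0" unfolding r_def using s4' by simp
  have "r \<le> sqrt (s^2)" unfolding r_def by (rule real_sqrt_le_mono) linarith
  then have rs: "r \<le> s" using assms(1) by simp
  have "sqrt ((s-2)^2) \<le> r" unfolding r_def
    by (rule real_sqrt_le_mono) (use assms(1) in \<open>simp add: power2_eq_square algebra_simps\<close>)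
  then have rs2: "r \<ge> s - 2" using assms(1) by simp
  have tdef: "t = (s + r)/2" unfolding t_def r_def ..
  show "t > 1" using tdef r0 assms(1) by simp
  have eq: "(s + r) * (s + r) + 4 = 2 * s * (s + r)" using r2 by algebra
  have "t * t + 1 = s * t" unfolding tdef using eq by (simp add: field_simps)
  moreover have "t \<noteq> 0" using tdef r0 assms(1) by simp
  ultimately show "t + 1/t = s" by (simp add: field_simps)
  show "t \<le> s" using tdef rs by simp
  show "t \<ge> s - 1" using tdef rs2 by simp
qed

lemma branch:
  assumes "2 < z" "z < 3"
  shows "mf z > 1" "(mf z)^2 = tf z" "tf z + 1 / tf z = sf z" "phat (mf z) (uf z) = 0"
    "sf z * Dz z = Nz z" "tf z \<le> sf z" "tf z \<ge> sf z - 1"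
proof -
  have s2: "sf z > 2" using sf_gt2[OF assms] .
  note T = tf_facts[OF s2, folded tf_def]
  show m1: "mf z > 1" unfolding mf_def using T(1) by simp
  show m2: "(mf z)^2 = tf z" unfolding mf_def using T(1) by simp
  show tt: "tf z + 1 / tf z = sf z" using T(2) .
  show sd: "sf z * Dz z = Nz z" using Dz_pos[OF assms(1)] by (simp add: sf_def)
  have "uf z = z - ((mf z)^2 + 1/(mf z)^2)" unfolding m2 tt uf_def ..
  from phat_z[OF _ this] m1 have "phat (mf z) (uf z) = (mf z)^8 * (Nz z - ((mf z)^2 + 1/(mf z)^2) * Dz z)"
    by simp
  also have "\<dots> = 0" unfolding m2 tt using sd by simp
  finally show "phat (mf z) (uf z) = 0" .
  show "tf z \<le> sf z" "tf z \<ge> sf z - 1" using T(3,4) by auto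
qed

lemma uf_z0: "uf z0 = 0"
proof -
  have "Nz z0 = z0 * Dz z0" using Nz_zDz[of z0] z0_props(3) by simp
  then show ?thesis using Dz_pos[OF z0_props(1)] by (simp add: uf_def sf_def)
qed

lemma uf_neg:
  assumes "2 < z" "z < z0" shows "uf z \<noteq> 0"
proof -
  have "z^2 - 3*z + 1 = (z - z0) * (z - (3 - z0))" using z0_props(3) by algebra
  moreover have "(z - z0) * (z - (3 - z0)) < 0" using assms z0_props(1)
    by (intro mult_neg_pos) auto
  ultimately have "Nz z - z * Dz z > 0" using Nz_zDz[of z] by linarith
  then have "sf z > z" using Dz_pos[OF assms(1)] by (simp add: sf_def field_simps)
  then show ?thesis by (simp add: uf_def)
qed



lemma lam_struct:
  assumes m: "m > 1" and ph: "phat m u = 0"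
  shows "eval_word (Am m) (Bm m u) (tb_longitude 11 3) = mk (lh11 m u / m^24) (lh12 m u / m^24) 0 (lh22 m u / m^24)"
    "(lh11 m u / m^24) * (lh22 m u / m^24) = 1"
    "(lh12 m u / m^24) * (1/m - m) = lh22 m u / m^24 - lh11 m u / m^24"
proof -
  have m0: "m \<noteq> 0" using m by simp
  have l21: "lh21 m u = 0" using lam21 ph by simp
  show E: "eval_word (Am m) (Bm m u) (tb_longitude 11 3) = mk (lh11 m u / m^24) (lh12 m u / m^24) 0 (lh22 m u / m^24)"
    using longitude_eval[OF m0] l21 by simp
  have "det (mk (lh11 m u / m^24) (lh12 m u / m^24) 0 (lh22 m u / m^24)) = 1"
    using det_eval[OF m0, of u "tb_longitude 11 3"] unfolding E .
  then show "(lh11 m u / m^24) * (lh22 m u / m^24) = 1"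
    unfolding det_mk by (simp only: mult_zero_right diff_zero)
  have "(1 - m^2) * lh12 m u = m * (lh22 m u - lh11 m u)" using lam12[of m u] ph by simp
  then show "(lh12 m u / m^24) * (1/m - m) = lh22 m u / m^24 - lh11 m u / m^24"
    using m0 by (simp add: field_simps power2_eq_square) algebra
qed

lemma diag_pow:
  assumes "Ti ** T = mat 1" "T ** Ti = mat 1" "eval_word A B w = T ** mk x 0 0 y ** Ti"
  shows "eval_word A B (concat (replicate n w)) = T ** mk (x^n) 0 0 (y^n) ** Ti"
proof (induction n)
  case 0
  then show ?case using assms(2) by (simp add: mat1_mk[symmetric] matrix_mul_rid)
next
  case (Suc n)
  have "eval_word A B (concat (replicate (Suc n) w)) = (T ** mk x 0 0 y ** Ti) ** (T ** mk (x^n) 0 0 (y^n) ** Ti)"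
    using Suc assms(3) by (simp add: eval_word_append)
  also have "\<dots> = T ** mk x 0 0 y ** (Ti ** T) ** mk (x^n) 0 0 (y^n) ** Ti"
    by (simp add: matrix_mul_assoc)
  also have "\<dots> = T ** (mk x 0 0 y ** mk (x^n) 0 0 (y^n)) ** Ti"
    using assms(1) by (simp add: matrix_mul_rid matrix_mul_assoc)
  also have "\<dots> = T ** mk (x^Suc n) 0 0 (y^Suc n) ** Ti"
    by (simp add: mk_mult)
  finally show ?case .
qed

lemma surgery_ok:
  assumes m: "m > 1" and ph: "phat m u = 0" and n: "m^n * (lh11 m u / m^24)^k = 1"
  shows "eval_word (Am m) (Bm m u) (word_pow [(GA,True)] (int n) @ word_pow (tb_longitude 11 3) (int k)) = mat 1"
proof -
  have m0: "m \<noteq> 0" using m by simp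
  define L where "L = lh11 m u / m^24"
  define Li where "Li = lh22 m u / m^24"
  define c where "c = lh12 m u / m^24"
  define \<kappa> where "\<kappa> = 1/m - m"
  have "1 < m * m" using m by (simp add: less_1_mult)
  then have k0: "\<kappa> \<noteq> 0" using m unfolding \<kappa>_def by (simp add: field_simps)
  note S = lam_struct[OF m ph, folded L_def Li_def c_def]
  define T where "T = mk 1 1 0 \<kappa>"
  define Ti where "Ti = mk 1 (-1/\<kappa>) 0 (1/\<kappa>)"
  have TT: "Ti ** T = mat 1" "T ** Ti = mat 1" using k0
    by (simp_all add: T_def Ti_def mk_mult mat1_mk mk_eq_iff field_simps)
  have eA: "eval_word (Am m) (Bm m u) [(GA,True)] = T ** mk m 0 0 (1/m) ** Ti"
    using k0 m0 by (simp add: T_def Ti_def Am_def mk_mult matrix_mul_rid mk_eq_iff \<kappa>_def field_simps)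
  have cc: "c * \<kappa> = Li - L" using S(3) unfolding \<kappa>_def .
  have eL: "eval_word (Am m) (Bm m u) (tb_longitude 11 3) = T ** mk L 0 0 Li ** Ti"
    unfolding S(1) using k0 cc by (simp add: T_def Ti_def mk_mult mk_eq_iff field_simps)
  have P1: "eval_word (Am m) (Bm m u) (word_pow [(GA,True)] (int n)) = T ** mk (m^n) 0 0 ((1/m)^n) ** Ti"
    unfolding word_pow_def using diag_pow[OF TT eA] by simp
  have P2: "eval_word (Am m) (Bm m u) (word_pow (tb_longitude 11 3) (int k)) = T ** mk (L^k) 0 0 (Li^k) ** Ti"
    unfolding word_pow_def using diag_pow[OF TT eL] by simp
  have nL: "m^n * L^k = 1" using n unfolding L_def .
  have "L \<noteq> 0" using S(2) by auto
  then have Li: "Li = 1 / L" using S(2) by (simp add: field_simps)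
  have nL2: "(1/m)^n * Li^k = 1" using nL unfolding Li by (simp add: power_one_over field_simps)
  have "eval_word (Am m) (Bm m u) (word_pow [(GA,True)] (int n) @ word_pow (tb_longitude 11 3) (int k))
     = T ** mk (m^n) 0 0 ((1/m)^n) ** (Ti ** T) ** mk (L^k) 0 0 (Li^k) ** Ti"
    by (simp add: eval_word_append P1 P2 matrix_mul_assoc)
  also have "\<dots> = T ** (mk (m^n) 0 0 ((1/m)^n) ** mk (L^k) 0 0 (Li^k)) ** Ti"
    using TT by (simp add: matrix_mul_rid matrix_mul_assoc)
  also have "\<dots> = T ** mk (m^n * L^k) 0 0 ((1/m)^n * Li^k) ** Ti"
    by (simp add: mk_mult)
  also have "\<dots> = mat 1" using nL nL2 TT by (simp add: mat1_mk[symmetric] matrix_mul_rid)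
  finally show ?thesis .
qed



lemma cont_lh11: "continuous_on S f \<Longrightarrow> continuous_on S g \<Longrightarrow> continuous_on S (\<lambda>x. lh11 (f x) (g x))"
  unfolding lh11_def by (intro continuous_intros)

lemma mul_div_cancel_aux: "X = Y * Z \<Longrightarrow> Y \<noteq> 0 \<Longrightarrow> X * (W / Y) = W * (Z::real)"
  by simp

lemma lam22_bound:
  assumes z: "2 < z" "z \<le> 2 + 1/50"
  shows "lh22 (mf z) (uf z) / (mf z)^24 \<ge> (tf z)^4 / 2"
proof -
  have z3: "z < 3" using z by simp
  define m where "m = mf z"
  define t where "t = tf z"
  define s where "s = sf z"
  define u where "u = uf z"
  note B = branch[OF z(1) z3, folded m_def t_def s_def u_def]
  have m1: "m > 1" and mt: "m^2 = t" and ts: "t + 1/t = s" and ph: "phat m u = 0"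
    and sD: "s * Dz z = Nz z" and tle: "t \<le> s" and tge: "t \<ge> s - 1" using B by auto
  have t1: "t > 1" using m1 mt by (metis less_1_mult power2_eq_square)
  have t0: "t \<noteq> 0" using t1 by simp
  have D0: "Dz z > 0" using Dz_pos[OF z(1)] .
  have l22: "lh22 m u = r22 m u" using lam22[of m u] ph by simp
  have us: "u = z - s" unfolding u_def s_def uf_def ..
  have ut: "u * t = t*z - t^2 - 1"
  proof -
    have "u * t = z * t - s * t" unfolding us by (simp add: algebra_simps)
    also have "s * t = t^2 + 1" unfolding ts[symmetric] using t0 by (simp add: field_simps power2_eq_square)
    finally show ?thesis by (simp add: algebra_simps)
  qed
  have e4: "t^4 * r22 m u = e4 t z" by (rule r22_t[OF mt ut])
  have rel: "Dz z * t^2 - Nz z * t + Dz z = 0"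
  proof -
    have "Nz z * t = Dz z * (t + 1/t) * t" unfolding ts sD[symmetric] by simp
    also have "\<dots> = Dz z * t^2 + Dz z" using t0 by (simp add: field_simps power2_eq_square)
    finally show ?thesis by simp
  qed
  have da0: "da z > 0" unfolding da_factor using z by simp
  have db0: "db z > 0" unfolding db_factor using z by simp
  have "(Dz z)^3 * (da z * db z * e4 t z - t^16 * (na z * db z + nb z * da z * t)) = 0"
    using cert22[of z t] rel by simp
  then have c: "da z * db z * e4 t z = t^16 * (na z * db z + nb z * da z * t)" using D0 by simp
  define a where "a = na z / da z"
  define b where "b = nb z / db z"
  have r22v: "r22 m u = t^12 * (a + b * t)"
  proof -
    have "da z * db z * (t^4 * r22 m u) = da z * db z * (t^4 * (t^12 * (a + b * t)))"
      unfolding e4 c a_def b_def using da0 db0 by (simp add: field_simps)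
    then have "t^4 * r22 m u = t^4 * (t^12 * (a + b * t))" using da0 db0 by simp
    then show ?thesis using t0 by (metis mult_left_cancel power_not_zero)
  qed
  have m24: "m^24 = t^12" unfolding mt[symmetric] by (simp add: power_mult[symmetric])
  have Li: "lh22 m u / m^24 = a + b * t" unfolding l22 r22v m24 using t0 by simp
  define e where "e = z - 2"
  have e: "0 \<le> e" "e \<le> 1/50" using z by (auto simp: e_def)
  have nb0: "nb z > 0" using nb_shift[OF e_def] nbe_pos[OF e] by simp
  have b0: "b > 0" unfolding b_def using nb0 db0 by simp
  have "a + b * t \<ge> a + b * (s - 1)" using b0 tge by (simp add: mult_left_mono)
  define M where "M = z^8*(z-1)^4*(z-2)^4"
  have M0: "M > 0" unfolding M_def using z by simp
  have h1: "M * a = na z * (z^4*(z-1)^4*(z-2)^2)" unfolding a_def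
    by (rule mul_div_cancel_aux) (unfold M_def da_factor, algebra, use z in simp)
  have sm1: "s - 1 = (Nz z - Dz z) / Dz z" unfolding sD[symmetric] using D0 by (simp add: field_simps)
  have h2: "M * (b * (s - 1)) = (nb z * (Nz z - Dz z)) * (z-1)^3"
  proof -
    have "b * (s - 1) = (nb z * (Nz z - Dz z)) / (db z * Dz z)" unfolding b_def sm1 by simp
    moreover have "M * ((nb z * (Nz z - Dz z)) / (db z * Dz z)) = (nb z * (Nz z - Dz z)) * (z-1)^3"
      by (rule mul_div_cancel_aux) (unfold M_def db_factor Dz_factor, algebra, use z in simp)
    ultimately show ?thesis by simp
  qed
  have h3: "M * (s^4/2) = (Nz z)^4/2"
  proof -
    have "s = Nz z / Dz z" using sD D0 by (simp add: field_simps)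
    moreover have "M = (Dz z)^4" unfolding M_def Dz_factor by algebra
    ultimately show ?thesis using D0 by (simp add: power_divide)
  qed
  have "M * (a + b * (s - 1) - s^4/2) = na z * z^4*(z-1)^4*(z-2)^2 + nb z * (Nz z - Dz z) * (z-1)^3 - (Nz z)^4/2"
    using h1 h2 h3 by (simp add: algebra_simps)
  also have "\<dots> \<ge> 0" unfolding P_shift[OF e_def] using Pe_pos[OF e] .
  finally have "a + b * (s - 1) - s^4/2 \<ge> 0" using M0 by (simp add: zero_le_mult_iff)
  moreover have "t^4 \<le> s^4" using tle t1 by (intro power_mono) auto
  ultimately show ?thesis unfolding m_def[symmetric] u_def[symmetric] t_def[symmetric] Li
    using \<open>a + b * t \<ge> a + b * (s - 1)\<close> by linarith
qed



lemma lh11_zero: "lh11 m 0 = m^24"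
  unfolding lh11_def by simp

theorem mainTheorem12:
  fixes r :: rat
  assumes "0 < r" and "r < 8"
  shows "has_nonabelian_SL2R_rep_surgery 11 3 r"
proof -
  obtain p q where pq: "quotient_of r = (p, q)" by (cases "quotient_of r") auto
  have q0: "q > 0" using quotient_of_denom_pos[OF pq] .
  have rpq: "r = of_int p / of_int q" using quotient_of_div[OF pq] .
  have "0 < (of_int p :: rat)" using assms(1) q0 unfolding rpq by (simp add: zero_less_divide_iff)
  then have p0: "p > 0" by simp
  have "(of_int p :: rat) < 8 * of_int q" using assms(2) q0 unfolding rpq by (simp add: divide_less_eq)
  then have p8: "p < 8 * q" by linarith
  define n where "n = nat p"
  define k where "k = nat q"
  have pn: "p = int n" and qk: "q = int k" using p0 q0 by (auto simp: n_def k_def)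
  have n1: "n \<ge> 1" and k1: "k \<ge> 1" and nk: "n + 1 \<le> 8 * k" using p0 q0 p8 by (auto simp: n_def k_def)
  have surg: "surgery_relator 11 3 r = word_pow [(GA,True)] (int n) @ word_pow (tb_longitude 11 3) (int k)"
    by (simp add: surgery_relator_def pq pn qk)
  define g where "g z = (mf z)^n * (lh11 (mf z) (uf z) / (mf z)^24)^k - 1" for z
  define e1 :: real where "e1 = min (1/50) (1 / (5 * (4^k + 2)))"
  define z1 where "z1 = 2 + e1"
  have p4: "(0::real) < 4^k" by simp
  have d: "0 < 1 / (5 * (4^k + 2::real))" by (intro divide_pos_pos mult_pos_pos add_pos_pos) simp_all
  have e1: "0 < e1" "e1 \<le> 1/50" "e1 \<le> 1 / (5 * (4^k + 2))" unfolding e1_def using d by auto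
  have z1: "2 < z1" "z1 \<le> 2 + 1/50" using e1 by (auto simp: z1_def)
  have z0: "2 < z0" "z0 < 3" using z0_props by auto
  have z0g: "z0 > 2 + 1/50"
  proof -
    have "sqrt 4 < sqrt 5" by (rule real_sqrt_less_mono) simp
    moreover have "sqrt 4 = (2::real)" by (simp add: real_sqrt_eq_iff)
    ultimately show ?thesis by (simp add: z0_def)
  qed
  have z1z0: "z1 < z0" using z1 z0g by simp
  have gz0: "g z0 > 0"
  proof -
    have "mf z0 > 1" using branch(1)[OF z0] .
    then have "(mf z0)^n > 1" using n1 by (simp add: one_less_power)
    moreover have L1: "lh11 (mf z0) (uf z0) / (mf z0)^24 = 1" using \<open>mf z0 > 1\<close> by (simp add: uf_z0 lh11_zero)
    ultimately show ?thesis unfolding g_def L1 by simp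
  qed
  have gz1: "g z1 < 0"
  proof -
    define m where "m = mf z1"
    define t where "t = tf z1"
    define s where "s = sf z1"
    define u where "u = uf z1"
    have z13: "z1 < 3" using z1 by simp
    note B = branch[OF z1(1) z13, folded m_def t_def s_def u_def]
    have m1: "m > 1" and mt: "m^2 = t" and ph: "phat m u = 0" and sD: "s * Dz z1 = Nz z1"
      and tge: "t \<ge> s - 1" using B by auto
    have LL: "(lh11 m u / m^24) * (lh22 m u / m^24) = 1" using lam_struct(2)[OF m1 ph] .
    have bnd: "lh22 m u / m^24 \<ge> t^4 / 2" using lam22_bound[OF z1] unfolding m_def u_def t_def .
    have t0: "t > 0" unfolding mt[symmetric] using m1 by simp
    define L where "L = lh11 m u / m^24"
    define Li where "Li = lh22 m u / m^24"
    have "t^4/2 > 0" using t0 by simp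
    then have Li0: "Li > 0" using bnd unfolding Li_def by linarith
    have LLi: "L = 1 / Li" using LL Li0 unfolding L_def Li_def by (simp add: field_simps)
    have L0: "L > 0" using LLi Li0 by simp
    have Lb: "L \<le> 2 / m^8"
    proof -
      have "t^4 = m^8" unfolding mt[symmetric] by (simp add: power_mult[symmetric])
      then have "Li \<ge> m^8 / 2" using bnd unfolding Li_def by simp
      moreover have "0 < m^8 / 2" using m1 by simp
      ultimately have "1 / Li \<le> 1 / (m^8 / 2)" using Li0 by (intro divide_left_mono) auto
      then show ?thesis unfolding LLi by simp
    qed
    define e where "e = z1 - 2"
    have ee: "e = e1" unfolding e_def z1_def by simp
    have N1: "Nz z1 \<ge> 1" using Nshift[OF e_def] e1(1) ee by (simp add: add_nonneg_nonneg)
    have Dpos: "Dz z1 > 0" using Dz_pos[OF z1(1)] .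
    have Dle: "Dz z1 \<le> 5 * e"
    proof -
      have "8*e^2 + 5*e^3 + e^4 \<le> e"
      proof -
        have "e \<le> 1/50" using e1 ee by simp
        have a: "e^2 \<le> e * (1/50)" using \<open>e \<le> 1/50\<close> e1(1) ee by (simp add: power2_eq_square mult_left_mono)
        have b: "e^3 \<le> e^2" using \<open>e \<le> 1/50\<close> e1(1) ee by (intro power_decreasing) auto
        have c: "e^4 \<le> e^2" using \<open>e \<le> 1/50\<close> e1(1) ee by (intro power_decreasing) auto
        show ?thesis using a b c e1(1) ee by linarith
      qed
      then show ?thesis using Dshift[OF e_def] by linarith
    qed
    have sbig: "s \<ge> 4^k + 2"
    proof -
      have f0: "5 * (1 / (5 * X)) = 1/(X::real)" for X by simp
      have "Dz z1 \<le> 5 * e1" using Dle ee by simp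
      also have "\<dots> \<le> 5 * (1 / (5 * (4^k + 2)))" using e1(3) by (rule mult_left_mono) simp
      also have "\<dots> = 1/(4^k+2)" by (rule f0)
      finally have "Dz z1 \<le> 1 / (4^k + 2)" .
      moreover have X0: "(0::real) < 4^k + 2" by (intro add_pos_pos) simp_all
      ultimately have "1 / (1 / (4^k + 2)) \<le> 1 / Dz z1" using Dpos
        by (intro divide_left_mono) auto
      then have "1 / Dz z1 \<ge> 4^k + 2" by simp
      moreover have "s = Nz z1 / Dz z1" using sD Dpos by (simp add: field_simps)
      moreover have "Nz z1 / Dz z1 \<ge> 1 / Dz z1" using N1 Dpos by (simp add: divide_right_mono)
      ultimately show ?thesis by linarith
    qed
    have mbig: "m > 2^k"
    proof -
      have f: "(2::real)^k * 2^k = 4^k" by (simp add: power_mult_distrib[symmetric])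
      have mm: "m * m = t" using mt by (simp add: power2_eq_square)
      have "4^k < t" using tge sbig by linarith
      then have lt: "(2::real)^k * 2^k < m * m" unfolding f mm .
      show ?thesis
      proof (rule ccontr)
        assume "\<not> m > 2^k"
        then have "m \<le> 2^k" by simp
        then have "m * m \<le> 2^k * 2^k" using m1 by (intro mult_mono) auto
        then show False using lt by simp
      qed
    qed
    have "m^n * L^k \<le> m^n * (2 / m^8)^k" using L0 Lb m1 by (intro mult_left_mono power_mono) auto
    also have "\<dots> = 2^k * m^n / m^(8*k)" by (simp add: power_divide power_mult)
    also have "\<dots> \<le> 2^k * m^n / m^(n+1)"
    proof -
      have "m^(n+1) \<le> m^(8*k)" using m1 nk by (intro power_increasing) auto
      then show ?thesis using m1 by (intro divide_left_mono) auto
    qed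
    also have "\<dots> = 2^k / m" using m1 by (simp add: field_simps)
    also have "\<dots> < 1" using mbig m1 by simp
    finally show ?thesis unfolding g_def m_def[symmetric] u_def[symmetric] L_def[symmetric] by simp
  qed
  have cont: "continuous_on {z1..z0} g"
  proof -
    have pos: "\<forall>z\<in>{z1..z0}. 2 < z \<and> z < 3" using z1 z0 by auto
    have cD: "\<forall>z\<in>{z1..z0}. Dz z \<noteq> 0" using pos Dz_pos by fastforce
    have cs: "continuous_on {z1..z0} sf" unfolding sf_def[abs_def]
      using cD unfolding Nz_def Dz_def by (intro continuous_intros) auto
    have ct: "continuous_on {z1..z0} tf" unfolding tf_def[abs_def] using cs by (intro continuous_intros) auto
    have cm: "continuous_on {z1..z0} mf" unfolding mf_def[abs_def] using ct by (intro continuous_intros)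
    have cu: "continuous_on {z1..z0} uf" unfolding uf_def[abs_def] using cs by (intro continuous_intros)
    have cm0: "\<forall>z\<in>{z1..z0}. (mf z)^24 \<noteq> 0"
    proof
      fix z assume "z \<in> {z1..z0}"
      then have "mf z > 1" using pos branch(1) by blast
      then show "(mf z)^24 \<noteq> 0" by simp
    qed
    have cl: "continuous_on {z1..z0} (\<lambda>z. lh11 (mf z) (uf z))" by (rule cont_lh11[OF cm cu])
    show ?thesis unfolding g_def[abs_def] using cm cl cm0 by (intro continuous_intros) auto
  qed
  obtain zs where zs: "z1 \<le> zs" "zs \<le> z0" "g zs = 0"
    using IVT'[of g z1 0 z0] gz1 gz0 z1z0 cont by force
  have zs0: "zs \<noteq> z0" using zs(3) gz0 by auto
  have zsr: "2 < zs" "zs < 3" "zs < z0" using zs z1 z0 zs0 by auto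
  define m where "m = mf zs"
  define u where "u = uf zs"
  note B = branch[OF zsr(1,2), folded m_def u_def]
  have m1: "m > 1" and ph: "phat m u = 0" using B by auto
  have m0: "m \<noteq> 0" using m1 by simp
  have u0: "u \<noteq> 0" unfolding u_def using uf_neg[OF zsr(1,3)] .
  have eq: "m^n * (lh11 m u / m^24)^k = 1" using zs(3) unfolding g_def m_def u_def by simp
  show ?thesis unfolding has_nonabelian_SL2R_rep_surgery_def
  proof (intro exI conjI)
    show "det (Am m) = 1" using m0 by (simp add: Am_def det_mk)
    show "det (Bm m u) = 1" using m0 by (simp add: Bm_def det_mk)
    show "eval_word (Am m) (Bm m u) (tb_relator 11 3) = mat 1" by (rule relator_ok[OF m0 ph])
    show "eval_word (Am m) (Bm m u) (surgery_relator 11 3 r) = mat 1"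
      unfolding surg by (rule surgery_ok[OF m1 ph eq])
    show "Am m ** Bm m u \<noteq> Bm m u ** Am m"
      using u0 by (simp add: Am_def Bm_def mk_mult mk_eq_iff)
  qed
qed


end
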